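(* Let $X$ be a proper geodesic metric space, $e\in X$, and $N$ a Morse gauge. Let $(x_n),(y_n)\subset X^{(N)}_e$ be sequences converging at infinity to $\lambda^-\neq\lambda^+\in\partial X^{(N)}_e$ respectively. Let $\gamma_{x,n}=[e,x_n]$, $\gamma_{y,n}=[e,y_n]$ be $N$-Morse geodesics, and let $\gamma_x,\gamma_y$ be geodesic rays from $e$ which are subsequential limits, uniformly on compact sets, of $(\gamma_{x,n})$ and $(\gamma_{y,n})$ respectively. For each $n$ let $\gamma_n$ be a geodesic joining $\gamma_x(n)$ and $\gamma_y(n)$. Then there exist a Morse gauge $N'$ depending only on $N$ and a biinfinite $N'$-Morse geodesic $\gamma:(-\infty,\infty)\to X$ such that a subsequence of $(\gamma_n)$ converges uniformly on compact sets to $\gamma$. Moreover $\gamma\subset\mathcal N_{4N(3,0)}(\gamma_x\cup\gamma_y)$.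
   Context: A Morse gauge is a function $N:\mathbb{R}_{\geq 1}\times\mathbb{R}_{\geq 0}\to\mathbb{R}_{\geq 0}$; a (quasi)geodesic is $N$-Morse if every $(K,C)$-quasigeodesic with endpoints on it lies in its $N(K,C)$-neighborhood. $X^{(N)}_e$ is the set of $y\in X$ such that some geodesic $[e,y]$ is $N$-Morse; $\partial X^{(N)}_e$ is its sequential Gromov boundary (sequences $(x_n)$ with $(x_i\cdot x_j)_e\to\infty$, modulo $(x_n)\sim(y_n)$ iff $(x_i\cdot y_j)_e\to\infty$, where $(x\cdot y)_z=\frac12(d(z,x)+d(z,y)-d(x,y))$). $\mathcal N_r(A)$ denotes the $r$-neighborhood of $A$. *)

theory Defs
  imports "HOL-Analysis.Analysis"
begin

text \<open>Metric spaces are given abstractly as a carrier M with a metric d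
  (locale predicate Metric_space), so that "N' depends only on N" can be
  stated uniformly over all metric spaces on a given carrier type.\<close>

definition proper_mspace :: "'a set \<Rightarrow> ('a \<Rightarrow> 'a \<Rightarrow> real) \<Rightarrow> bool" where
  "proper_mspace M d \<longleftrightarrow>
     (\<forall>x\<in>M. \<forall>r. compactin (Metric_space.mtopology M d) (Metric_space.mcball M d x r))"

text \<open>gamma restricted to the parameter set I is an isometric embedding
  (geodesic segment for I = [a,b], ray for I = [0,oo), biinfinite for I = UNIV).\<close>
definition isometric_on :: "'a set \<Rightarrow> ('a \<Rightarrow> 'a \<Rightarrow> real) \<Rightarrow> (real \<Rightarrow> 'a) \<Rightarrow> real set \<Rightarrow> bool" where
  "isometric_on M d \<gamma> I \<longleftrightarrow> \<gamma> ` I \<subseteq> M \<and> (\<forall>s\<in>I. \<forall>t\<in>I. d (\<gamma> s) (\<gamma> t) = \<bar>s - t\<bar>)"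

definition geodesic_mspace :: "'a set \<Rightarrow> ('a \<Rightarrow> 'a \<Rightarrow> real) \<Rightarrow> bool" where
  "geodesic_mspace M d \<longleftrightarrow>
     (\<forall>x\<in>M. \<forall>y\<in>M. \<exists>\<gamma>. isometric_on M d \<gamma> {0..d x y} \<and> \<gamma> 0 = x \<and> \<gamma> (d x y) = y)"

text \<open>(K,C)-quasigeodesic q : [a,b] -> M (no continuity required).\<close>
definition quasigeodesic :: "'a set \<Rightarrow> ('a \<Rightarrow> 'a \<Rightarrow> real) \<Rightarrow> real \<Rightarrow> real \<Rightarrow> (real \<Rightarrow> 'a) \<Rightarrow> real \<Rightarrow> real \<Rightarrow> bool" where
  "quasigeodesic M d K C q a b \<longleftrightarrow> a \<le> b \<and> q ` {a..b} \<subseteq> M \<and>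
     (\<forall>s\<in>{a..b}. \<forall>t\<in>{a..b}. \<bar>s - t\<bar> / K - C \<le> d (q s) (q t) \<and> d (q s) (q t) \<le> K * \<bar>s - t\<bar> + C)"

definition nbhd :: "'a set \<Rightarrow> ('a \<Rightarrow> 'a \<Rightarrow> real) \<Rightarrow> real \<Rightarrow> 'a set \<Rightarrow> 'a set" where
  "nbhd M d r A = {x\<in>M. \<exists>y\<in>A. d x y \<le> r}"

definition morse_gauge :: "(real \<Rightarrow> real \<Rightarrow> real) \<Rightarrow> bool" where
  "morse_gauge N \<longleftrightarrow> (\<forall>K C. 1 \<le> K \<longrightarrow> 0 \<le> C \<longrightarrow> 0 \<le> N K C)"

definition morse :: "'a set \<Rightarrow> ('a \<Rightarrow> 'a \<Rightarrow> real) \<Rightarrow> (real \<Rightarrow> real \<Rightarrow> real) \<Rightarrow> (real \<Rightarrow> 'a) \<Rightarrow> real set \<Rightarrow> bool" where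
  "morse M d N \<gamma> I \<longleftrightarrow>
     (\<forall>K C q a b. 1 \<le> K \<longrightarrow> 0 \<le> C \<longrightarrow> quasigeodesic M d K C q a b \<longrightarrow>
        q a \<in> \<gamma> ` I \<longrightarrow> q b \<in> \<gamma> ` I \<longrightarrow> q ` {a..b} \<subseteq> nbhd M d (N K C) (\<gamma> ` I))"

definition morse_stratum :: "'a set \<Rightarrow> ('a \<Rightarrow> 'a \<Rightarrow> real) \<Rightarrow> (real \<Rightarrow> real \<Rightarrow> real) \<Rightarrow> 'a \<Rightarrow> 'a set" where
  "morse_stratum M d N e = {y\<in>M. \<exists>\<gamma>. isometric_on M d \<gamma> {0..d e y} \<and> \<gamma> 0 = e \<and>
      \<gamma> (d e y) = y \<and> morse M d N \<gamma> {0..d e y}}"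

definition gprod :: "('a \<Rightarrow> 'a \<Rightarrow> real) \<Rightarrow> 'a \<Rightarrow> 'a \<Rightarrow> 'a \<Rightarrow> real" where
  "gprod d z x y = (d z x + d z y - d x y) / 2"

definition converges_at_infinity :: "('a \<Rightarrow> 'a \<Rightarrow> real) \<Rightarrow> 'a \<Rightarrow> (nat \<Rightarrow> 'a) \<Rightarrow> bool" where
  "converges_at_infinity d e xs \<longleftrightarrow>
     (\<forall>B. \<exists>n0. \<forall>i\<ge>n0. \<forall>j\<ge>n0. B \<le> gprod d e (xs i) (xs j))"

definition gromov_equiv :: "('a \<Rightarrow> 'a \<Rightarrow> real) \<Rightarrow> 'a \<Rightarrow> (nat \<Rightarrow> 'a) \<Rightarrow> (nat \<Rightarrow> 'a) \<Rightarrow> bool" where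
  "gromov_equiv d e xs ys \<longleftrightarrow>
     (\<forall>B. \<exists>n0. \<forall>i\<ge>n0. \<forall>j\<ge>n0. B \<le> gprod d e (xs i) (ys j))"

definition subseq_limit_ray ::
  "('a \<Rightarrow> 'a \<Rightarrow> real) \<Rightarrow> (nat \<Rightarrow> real) \<Rightarrow> (nat \<Rightarrow> real \<Rightarrow> 'a) \<Rightarrow> (real \<Rightarrow> 'a) \<Rightarrow> bool" where
  "subseq_limit_ray d L gs g \<longleftrightarrow> (\<exists>\<phi>. strict_mono \<phi> \<and>
     (\<forall>T \<epsilon>. 0 < \<epsilon> \<longrightarrow> (\<exists>k0::nat. \<forall>k\<ge>k0. T \<le> L (\<phi> k) \<and>
        (\<forall>t\<in>{0..T}. d (gs (\<phi> k) t) (g t) < \<epsilon>))))"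

end

theory Submission
  imports Defs "HOL-Library.Diagonal_Subsequence"
begin

context Metric_space begin

lemma iso_M: "isometric_on M d g I \<Longrightarrow> t \<in> I \<Longrightarrow> g t \<in> M"
  unfolding isometric_on_def by auto

lemma iso_d: "isometric_on M d g I \<Longrightarrow> s \<in> I \<Longrightarrow> t \<in> I \<Longrightarrow> d (g s) (g t) = \<bar>s - t\<bar>"
  unfolding isometric_on_def by auto

lemma iso_sub: "isometric_on M d g I \<Longrightarrow> J \<subseteq> I \<Longrightarrow> isometric_on M d g J"
  unfolding isometric_on_def by auto

lemma iso_reverse:
  assumes "isometric_on M d g {a..b}"
  shows "isometric_on M d (\<lambda>t. g (a + b - t)) {a..b}"
  using assms unfolding isometric_on_def by (auto simp: abs_minus_commute) 

lemma iso_shift: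
  assumes "isometric_on M d g {a..b}"
  shows "isometric_on M d (\<lambda>t. g (t + c)) {a-c..b-c}"
  using assms unfolding isometric_on_def by (auto simp: image_subset_iff)

lemma tri3: "x \<in> M \<Longrightarrow> y \<in> M \<Longrightarrow> z \<in> M \<Longrightarrow> d x z \<le> d x y + d y z"
  by (rule triangle)

lemma quasi_mono: "quasigeodesic M d K C q a b \<Longrightarrow> C \<le> C' \<Longrightarrow> quasigeodesic M d K C' q a b"
  unfolding quasigeodesic_def by (meson add_left_mono diff_left_mono order_trans)

lemma iso_quasi: "isometric_on M d g {a..b} \<Longrightarrow> a \<le> b \<Longrightarrow> quasigeodesic M d 1 0 g a b"
  unfolding quasigeodesic_def isometric_on_def by auto

lemma quasi_M: "quasigeodesic M d K C q a b \<Longrightarrow> s \<in> {a..b} \<Longrightarrow> q s \<in> M"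
  unfolding quasigeodesic_def by auto

lemma quasi_perturb:
  assumes q: "quasigeodesic M d K C q a b"
    and p: "\<forall>s\<in>{a..b}. q' s \<in> M \<and> d (q s) (q' s) \<le> \<rho>"
  shows "quasigeodesic M d K (C + 2*\<rho>) q' a b"
  unfolding quasigeodesic_def
proof (intro conjI ballI)
  show "a \<le> b" using q unfolding quasigeodesic_def by auto
  show "q' ` {a..b} \<subseteq> M" using p by auto
  fix s t assume s: "s \<in> {a..b}" and t: "t \<in> {a..b}"
  have qs: "q s \<in> M" "q t \<in> M" using q s t unfolding quasigeodesic_def by auto
  have ps: "q' s \<in> M" "q' t \<in> M" "d (q s) (q' s) \<le> \<rho>" "d (q t) (q' t) \<le> \<rho>" using p s t by auto
  have Q: "\<bar>s - t\<bar> / K - C \<le> d (q s) (q t)" "d (q s) (q t) \<le> K * \<bar>s - t\<bar> + C"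
    using q s t unfolding quasigeodesic_def by auto
  have a1: "d (q s) (q t) \<le> d (q s) (q' s) + d (q' s) (q' t) + d (q' t) (q t)"
    using triangle[of "q s" "q' s" "q t"] triangle[of "q' s" "q' t" "q t"] qs ps by auto
  have a2: "d (q' s) (q' t) \<le> d (q' s) (q s) + d (q s) (q t) + d (q t) (q' t)"
    using triangle[of "q' s" "q s" "q' t"] triangle[of "q s" "q t" "q' t"] qs ps by auto
  show "\<bar>s - t\<bar> / K - (C + 2 * \<rho>) \<le> d (q' s) (q' t)"
    using a1 Q ps commute[of "q t" "q' t"] by linarith
  show "d (q' s) (q' t) \<le> K * \<bar>s - t\<bar> + (C + 2 * \<rho>)"
    using a2 Q ps commute[of "q' s" "q s"] by linarith
qed

lemma morse_apply:
  assumes "morse M d N \<gamma> I" "1 \<le> K" "0 \<le> C" "quasigeodesic M d K C q a b"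
    "q a \<in> \<gamma> ` I" "q b \<in> \<gamma> ` I" "s \<in> {a..b}"
  shows "\<exists>t\<in>I. d (q s) (\<gamma> t) \<le> N K C"
  using assms unfolding morse_def nbhd_def by blast

lemma morse_perturb:
  assumes m: "morse M d N \<alpha> I" and K: "1 \<le> K" "0 \<le> C"
    and q: "quasigeodesic M d K C q a b"
    and u: "u1 \<in> I" "u2 \<in> I" "d (q a) (\<alpha> u1) \<le> \<rho>" "d (q b) (\<alpha> u2) \<le> \<rho>"
    and aI: "\<alpha> ` I \<subseteq> M"
    and s: "s \<in> {a..b}"
  shows "\<exists>t\<in>I. d (q s) (\<alpha> t) \<le> N K (C + 2*\<rho>) + \<rho>"
proof -
  have ab: "a \<le> b" using q unfolding quasigeodesic_def by auto
  have r0: "0 \<le> \<rho>" using u(3) nonneg[of "q a" "\<alpha> u1"] by linarith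
  define q' where "q' = (\<lambda>t. if t = a then \<alpha> u1 else if t = b then \<alpha> u2 else q t)"
  have p: "\<forall>s\<in>{a..b}. q' s \<in> M \<and> d (q s) (q' s) \<le> \<rho>"
  proof
    fix t assume t: "t \<in> {a..b}"
    have "q t \<in> M" using q t by (rule quasi_M)
    then show "q' t \<in> M \<and> d (q t) (q' t) \<le> \<rho>"
      using u aI r0 unfolding q'_def by auto
  qed
  have q'q: "quasigeodesic M d K (C + 2*\<rho>) q' a b" by (rule quasi_perturb[OF q p])
  have ea: "q' a \<in> \<alpha> ` I" "q' b \<in> \<alpha> ` I" using u unfolding q'_def by auto
  obtain t where t: "t \<in> I" "d (q' s) (\<alpha> t) \<le> N K (C + 2*\<rho>)"
    using morse_apply[OF m K(1) _ q'q ea s] K r0 by auto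
  have "q s \<in> M" "q' s \<in> M" "\<alpha> t \<in> M" using q s p aI t by (auto intro: quasi_M)
  then have "d (q s) (\<alpha> t) \<le> d (q s) (q' s) + d (q' s) (\<alpha> t)" by (rule triangle)
  then show ?thesis using t p s by force
qed

lemma dist_cont:
  assumes "isometric_on M d g {a..b}" "x \<in> M"
  shows "continuous_on {a..b} (\<lambda>t. d x (g t))"
proof -
  have "1-lipschitz_on {a..b} (\<lambda>t. d x (g t))"
  proof (rule lipschitz_onI)
    fix s t assume s: "s \<in> {a..b}" and t: "t \<in> {a..b}"
    have m: "g s \<in> M" "g t \<in> M" using assms s t by (auto intro: iso_M)
    have "d x (g s) \<le> d x (g t) + d (g t) (g s)" "d x (g t) \<le> d x (g s) + d (g s) (g t)"
      using triangle m assms(2) by auto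
    moreover have "d (g s) (g t) = \<bar>s - t\<bar>" "d (g t) (g s) = \<bar>s - t\<bar>"
      using iso_d[OF assms(1)] s t by (auto simp: abs_minus_commute)
    ultimately show "dist (d x (g s)) (d x (g t)) \<le> 1 * dist s t"
      by (simp add: dist_real_def abs_le_iff)
  qed simp
  then show ?thesis by (rule lipschitz_on_continuous_on)
qed

lemma closest_point:
  assumes "isometric_on M d g {a..b}" "a \<le> b" "x \<in> M"
  shows "\<exists>\<sigma>\<in>{a..b}. \<forall>t\<in>{a..b}. d x (g \<sigma>) \<le> d x (g t)"
  using continuous_attains_inf[OF compact_Icc _ dist_cont[OF assms(1,3)]] assms(2) by auto

end

context Metric_space begin

lemma proj3_quasi:
  fixes A1 C1 Cc :: real
  assumes g1: "isometric_on M d g1 {0..A1}" "g1 0 = c" "g1 A1 = \<zeta> \<sigma>1"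
  and z: "isometric_on M d \<zeta> {\<sigma>1..\<sigma>}" "\<sigma>1 \<le> \<sigma>"
  and g3: "isometric_on M d g3 {0..C1}" "g3 0 = \<zeta> \<sigma>" "g3 C1 = e"
  and hc: "\<forall>t\<in>{\<sigma>1..\<sigma>}. A1 \<le> d c (\<zeta> t)"
  and he: "\<forall>t\<in>{\<sigma>1..\<sigma>}. C1 \<le> d e (\<zeta> t)"
  and nn: "0 \<le> A1" "0 \<le> C1" "0 \<le> Cc"
  and cond: "2*A1 \<le> Cc \<or> 2*(A1+C1) \<le> \<sigma> - \<sigma>1"
  shows "quasigeodesic M d 3 Cc (\<lambda>t. if t \<le> A1 then g1 t else if t \<le> A1 + (\<sigma>-\<sigma>1) then \<zeta> (\<sigma>1 + (t - A1)) else g3 (t - A1 - (\<sigma>-\<sigma>1))) 0 (A1 + (\<sigma> - \<sigma>1) + C1)"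
    (is "quasigeodesic M d 3 Cc ?q 0 ?T")
proof -
  define L1 where "L1 = \<sigma> - \<sigma>1"
  have L1: "0 \<le> L1" using z(2) L1_def by simp
  have cM: "c \<in> M" using g1 nn by (metis atLeastAtMost_iff iso_M order_refl)
  have eM: "e \<in> M" using g3 nn by (metis atLeastAtMost_iff iso_M order_refl)
  have p1M: "\<zeta> \<sigma>1 \<in> M" "\<zeta> \<sigma> \<in> M" using z iso_M by auto
  have G1: "g1 s \<in> M \<and> d c (g1 s) = s \<and> d (g1 s) (\<zeta> \<sigma>1) = A1 - s" if "s \<in> {0..A1}" for s
    using iso_M[OF g1(1) that] iso_d[OF g1(1), of 0 s] iso_d[OF g1(1), of s A1] that nn g1(2,3) by auto
  have Z: "\<zeta> t \<in> M \<and> d (\<zeta> \<sigma>1) (\<zeta> t) = t - \<sigma>1 \<and> d (\<zeta> t) (\<zeta> \<sigma>) = \<sigma> - t" if "t \<in> {\<sigma>1..\<sigma>}" for t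
    using iso_M[OF z(1) that] iso_d[OF z(1), of \<sigma>1 t] iso_d[OF z(1), of t \<sigma>] that z(2) by auto
  have G3: "g3 \<tau> \<in> M \<and> d (\<zeta> \<sigma>) (g3 \<tau>) = \<tau> \<and> d (g3 \<tau>) e = C1 - \<tau>" if "\<tau> \<in> {0..C1}" for \<tau>
    using iso_M[OF g3(1) that] iso_d[OF g3(1), of 0 \<tau>] iso_d[OF g3(1), of \<tau> C1] that nn g3(2,3) by auto
  have dp: "d (\<zeta> \<sigma>1) (\<zeta> \<sigma>) = L1" using Z[of \<sigma>] z(2) L1_def by auto
  have P12: "(A1 - s + (t - \<sigma>1))/3 \<le> d (g1 s) (\<zeta> t) \<and> d (g1 s) (\<zeta> t) \<le> A1 - s + (t - \<sigma>1)"
    if s: "s \<in> {0..A1}" and t: "t \<in> {\<sigma>1..\<sigma>}" for s t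
  proof -
    have a: "g1 s \<in> M" "d c (g1 s) = s" "d (g1 s) (\<zeta> \<sigma>1) = A1 - s" using G1 s by auto
    have b: "\<zeta> t \<in> M" "d (\<zeta> \<sigma>1) (\<zeta> t) = t - \<sigma>1" using Z t by auto
    have "d c (\<zeta> t) \<le> d c (g1 s) + d (g1 s) (\<zeta> t)" using triangle[of c "g1 s" "\<zeta> t"] cM a b by blast
    moreover have "d (\<zeta> \<sigma>1) (\<zeta> t) \<le> d (\<zeta> \<sigma>1) (g1 s) + d (g1 s) (\<zeta> t)" using triangle[of "\<zeta> \<sigma>1" "g1 s" "\<zeta> t"] p1M a b by blast
    moreover have "d (g1 s) (\<zeta> t) \<le> d (g1 s) (\<zeta> \<sigma>1) + d (\<zeta> \<sigma>1) (\<zeta> t)" using triangle[of "g1 s" "\<zeta> \<sigma>1" "\<zeta> t"] p1M a b by blast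
    moreover have "A1 \<le> d c (\<zeta> t)" using hc t by auto
    ultimately have F: "d c (\<zeta> t) \<le> d c (g1 s) + d (g1 s) (\<zeta> t)" "d (\<zeta> \<sigma>1) (\<zeta> t) \<le> d (\<zeta> \<sigma>1) (g1 s) + d (g1 s) (\<zeta> t)"
      "d (g1 s) (\<zeta> t) \<le> d (g1 s) (\<zeta> \<sigma>1) + d (\<zeta> \<sigma>1) (\<zeta> t)" "A1 \<le> d c (\<zeta> t)" by auto
    have l: "(A1 - s + (t - \<sigma>1))/3 \<le> d (g1 s) (\<zeta> t)" using F a b commute[of "\<zeta> \<sigma>1" "g1 s"] by argo
    have u: "d (g1 s) (\<zeta> t) \<le> A1 - s + (t - \<sigma>1)" using F a b commute[of "\<zeta> \<sigma>1" "g1 s"] by argo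
    show ?thesis using l u by simp
  qed
  have P23: "(\<sigma> - t + \<tau>)/3 \<le> d (\<zeta> t) (g3 \<tau>) \<and> d (\<zeta> t) (g3 \<tau>) \<le> \<sigma> - t + \<tau>"
    if t: "t \<in> {\<sigma>1..\<sigma>}" and u: "\<tau> \<in> {0..C1}" for t \<tau>
  proof -
    have a: "g3 \<tau> \<in> M" "d (\<zeta> \<sigma>) (g3 \<tau>) = \<tau>" "d (g3 \<tau>) e = C1 - \<tau>" using G3 u by auto
    have b: "\<zeta> t \<in> M" "d (\<zeta> t) (\<zeta> \<sigma>) = \<sigma> - t" using Z t by auto
    have "d e (\<zeta> t) \<le> d e (g3 \<tau>) + d (g3 \<tau>) (\<zeta> t)" using triangle[of e "g3 \<tau>" "\<zeta> t"] eM a b by blast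
    moreover have "d (\<zeta> t) (\<zeta> \<sigma>) \<le> d (\<zeta> t) (g3 \<tau>) + d (g3 \<tau>) (\<zeta> \<sigma>)" using triangle[of "\<zeta> t" "g3 \<tau>" "\<zeta> \<sigma>"] p1M a b by blast
    moreover have "d (\<zeta> t) (g3 \<tau>) \<le> d (\<zeta> t) (\<zeta> \<sigma>) + d (\<zeta> \<sigma>) (g3 \<tau>)" using triangle[of "\<zeta> t" "\<zeta> \<sigma>" "g3 \<tau>"] p1M a b by blast
    moreover have "C1 \<le> d e (\<zeta> t)" using he t by auto
    ultimately have F: "d e (\<zeta> t) \<le> d e (g3 \<tau>) + d (g3 \<tau>) (\<zeta> t)" "d (\<zeta> t) (\<zeta> \<sigma>) \<le> d (\<zeta> t) (g3 \<tau>) + d (g3 \<tau>) (\<zeta> \<sigma>)"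
      "d (\<zeta> t) (g3 \<tau>) \<le> d (\<zeta> t) (\<zeta> \<sigma>) + d (\<zeta> \<sigma>) (g3 \<tau>)" "C1 \<le> d e (\<zeta> t)" by auto
    have l: "(\<sigma> - t + \<tau>)/3 \<le> d (\<zeta> t) (g3 \<tau>)"
      using F a b commute[of "\<zeta> \<sigma>" "g3 \<tau>"] commute[of "g3 \<tau>" "\<zeta> t"] commute[of e "g3 \<tau>"] by argo
    have u: "d (\<zeta> t) (g3 \<tau>) \<le> \<sigma> - t + \<tau>"
      using F a b commute[of "\<zeta> \<sigma>" "g3 \<tau>"] commute[of "g3 \<tau>" "\<zeta> t"] commute[of e "g3 \<tau>"] by argo
    show ?thesis using l u by simp
  qed
  have P13: "(A1 - s + L1 + \<tau>)/3 - Cc \<le> d (g1 s) (g3 \<tau>) \<and> d (g1 s) (g3 \<tau>) \<le> A1 - s + L1 + \<tau>"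
    if s: "s \<in> {0..A1}" and u: "\<tau> \<in> {0..C1}" for s \<tau>
  proof -
    have a: "g1 s \<in> M" "d c (g1 s) = s" "d (g1 s) (\<zeta> \<sigma>1) = A1 - s" using G1 s by auto
    have b: "g3 \<tau> \<in> M" "d (\<zeta> \<sigma>) (g3 \<tau>) = \<tau>" "d (g3 \<tau>) e = C1 - \<tau>" using G3 u by auto
    have i: "d (\<zeta> \<sigma>1) (\<zeta> \<sigma>) \<le> d (\<zeta> \<sigma>1) (g1 s) + d (g1 s) (g3 \<tau>) + d (g3 \<tau>) (\<zeta> \<sigma>)"
      using triangle[OF p1M(1) a(1) p1M(2)] triangle[OF a(1) b(1) p1M(2)] by linarith
    have ii: "d e (\<zeta> \<sigma>1) \<le> d e (g3 \<tau>) + d (g3 \<tau>) (\<zeta> \<sigma>1)" using triangle[of e "g3 \<tau>" "\<zeta> \<sigma>1"] eM p1M b by blast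
    have ii2: "d (g3 \<tau>) (\<zeta> \<sigma>1) \<le> d (g3 \<tau>) (g1 s) + d (g1 s) (\<zeta> \<sigma>1)" using triangle[of "g3 \<tau>" "g1 s" "\<zeta> \<sigma>1"] p1M a b by blast
    have he1: "C1 \<le> d e (\<zeta> \<sigma>1)" using he z(2) by auto
    have up: "d (g1 s) (g3 \<tau>) \<le> d (g1 s) (\<zeta> \<sigma>1) + d (\<zeta> \<sigma>1) (\<zeta> \<sigma>) + d (\<zeta> \<sigma>) (g3 \<tau>)"
      using triangle[OF a(1) p1M(1) b(1)] triangle[OF p1M(1) p1M(2) b(1)] by linarith
    have cm: "d (\<zeta> \<sigma>1) (g1 s) = A1 - s" "d (g3 \<tau>) (\<zeta> \<sigma>) = \<tau>" "d e (g3 \<tau>) = C1 - \<tau>" "d (g3 \<tau>) (g1 s) = d (g1 s) (g3 \<tau>)"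
      using a b commute by auto
    have x: "0 \<le> A1 - s" "A1 - s \<le> A1" "0 \<le> \<tau>" "\<tau> \<le> C1" using s u by auto
    have u: "d (g1 s) (g3 \<tau>) \<le> A1 - s + L1 + \<tau>" using up cm dp a b by linarith
    have l: "(A1 - s + L1 + \<tau>)/3 - Cc \<le> d (g1 s) (g3 \<tau>)"
    proof (cases "2*A1 \<le> Cc")
      case True
      then show ?thesis using i ii ii2 he1 up cm dp a b x nn by argo
    next
      case False
      then have "2*(A1+C1) \<le> L1" using cond L1_def by auto
      then show ?thesis using i ii ii2 he1 up cm dp a b x nn by argo
    qed
    show ?thesis using l u by simp
  qed
  have qM: "?q t \<in> M" if "t \<in> {0..?T}" for t
    using that G1 Z G3 L1_def by auto
  have key: "(v - u)/3 - Cc \<le> d (?q u) (?q v) \<and> d (?q u) (?q v) \<le> 3*(v - u) + Cc"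
    if u: "u \<in> {0..?T}" and v: "v \<in> {0..?T}" and uv: "u \<le> v" for u v
  proof -
    consider (a) "v \<le> A1" | (b) "u \<le> A1" "A1 < v" "v \<le> A1 + L1" | (c) "u \<le> A1" "A1 + L1 < v"
      | (d) "A1 < u" "u \<le> A1 + L1" "v \<le> A1 + L1" | (e) "A1 < u" "u \<le> A1 + L1" "A1 + L1 < v"
      | (f) "A1 + L1 < u" using uv by linarith
    then show ?thesis
    proof cases
      case a
      then have "d (?q u) (?q v) = v - u" using iso_d[OF g1(1), of u v] u v uv by auto
      then show ?thesis using nn uv by argo
    next
      case b
      then have e: "?q u = g1 u" "?q v = \<zeta> (\<sigma>1 + (v - A1))" using L1_def L1 by auto
      have s1: "u \<in> {0..A1}" "\<sigma>1 + (v - A1) \<in> {\<sigma>1..\<sigma>}" using b u v L1_def by auto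
      note h = P12[OF s1]
      show ?thesis using h nn uv unfolding e L1_def by argo
    next
      case c
      then have e: "?q u = g1 u" "?q v = g3 (v - A1 - L1)" using L1_def L1 by auto
      have s1: "u \<in> {0..A1}" "v - A1 - L1 \<in> {0..C1}" using c u v L1_def by auto
      note h = P13[OF s1]
      show ?thesis using h nn uv unfolding e L1_def by argo
    next
      case d
      then have "d (?q u) (?q v) = v - u" using iso_d[OF z(1), of "\<sigma>1 + (u - A1)" "\<sigma>1 + (v - A1)"] u v uv L1_def by auto
      then show ?thesis using nn uv by argo
    next
      case e
      then have e': "?q u = \<zeta> (\<sigma>1 + (u - A1))" "?q v = g3 (v - A1 - L1)" using L1_def L1 by auto
      have s1: "\<sigma>1 + (u - A1) \<in> {\<sigma>1..\<sigma>}" "v - A1 - L1 \<in> {0..C1}" using e u v L1_def by auto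
      note h = P23[OF s1]
      show ?thesis using h nn uv unfolding e' L1_def by argo
    next
      case f
      then have "d (?q u) (?q v) = v - u" using iso_d[OF g3(1), of "u - A1 - L1" "v - A1 - L1"] u v uv L1_def nn L1 by auto
      then show ?thesis using nn uv by argo
    qed
  qed
  show ?thesis
    unfolding quasigeodesic_def
  proof (intro conjI ballI)
    show "0 \<le> ?T" using nn L1 L1_def by simp
    show "?q ` {0..?T} \<subseteq> M" by (rule image_subsetI, rule qM)
    fix s t assume s: "s \<in> {0..?T}" and t: "t \<in> {0..?T}"
    have "\<bar>s - t\<bar> / 3 - Cc \<le> d (?q s) (?q t) \<and> d (?q s) (?q t) \<le> 3 * \<bar>s - t\<bar> + Cc"
    proof (cases "s \<le> t")
      case True then show ?thesis using key[OF s t] by auto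
    next
      case False then show ?thesis using key[OF t s] commute[of "?q s" "?q t"] by auto
    qed
    then show "\<bar>s - t\<bar> / 3 - Cc \<le> d (?q s) (?q t)" "d (?q s) (?q t) \<le> 3 * \<bar>s - t\<bar> + Cc" by auto
  qed
qed

end

lemma civt:
  fixes f :: "real \<Rightarrow> real"
  assumes ab: "a \<le> b" and L: "\<forall>s\<in>{a..b}. \<forall>s'\<in>{a..b}. \<bar>f s - f s'\<bar> \<le> Lc*\<bar>s - s'\<bar> + J"
    and Lc: "0 \<le> Lc" and fa: "f a \<le> w" and fb: "w \<le> f b"
  shows "\<exists>s\<in>{a..b}. \<bar>f s - w\<bar> \<le> J + 1"
proof (cases "f b \<le> w")
  case True
  have aa: "a \<in> {a..b}" using ab by simp
  have "\<bar>f a - f a\<bar> \<le> Lc*\<bar>a - a\<bar> + J" using L aa by blast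
  then have "0 \<le> J" by simp
  then show ?thesis using True fb ab by (intro bexI[of _ b]) auto
next
  case False
  define S where "S = {s\<in>{a..b}. f s \<le> w}"
  define \<sigma> where "\<sigma> = Sup S"
  have aS: "a \<in> S" using ab fa S_def by auto
  have bdd: "bdd_above S" unfolding S_def by (rule bdd_aboveI[of _ b]) auto
  have sig1: "a \<le> \<sigma>" using cSup_upper[OF aS bdd] \<sigma>_def by simp
  have Sne: "S \<noteq> {}" using aS by blast
  have Sb: "\<And>x. x \<in> S \<Longrightarrow> x \<le> b" unfolding S_def by simp
  have sig2: "\<sigma> \<le> b" unfolding \<sigma>_def by (rule cSup_least[OF Sne Sb])
  note sig = sig1 sig2
  define \<eta> where "\<eta> = 1 / (2*Lc + 2)"
  have eta: "0 < \<eta>" "2*Lc*\<eta> \<le> 1" using Lc by (auto simp: \<eta>_def field_simps)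
  obtain s' where s': "s' \<in> S" "\<sigma> - \<eta> < s'"
    using less_cSupD[of S "\<sigma> - \<eta>"] aS eta \<sigma>_def by fastforce
  have s'2: "s' \<le> \<sigma>" using cSup_upper[OF s'(1) bdd] \<sigma>_def by auto
  define s'' where "s'' = min b (\<sigma> + \<eta>)"
  have s''1: "s'' \<in> {a..b}" using sig eta by (auto simp: s''_def)
  have s''2: "w < f s''"
  proof (cases "\<sigma> < b")
    case True
    then have "\<sigma> < s''" using eta by (auto simp: s''_def)
    then have "s'' \<notin> S" using cSup_upper[of s'' S] bdd \<sigma>_def by force
    then show ?thesis using s''1 S_def by auto
  next
    case False
    then have "s'' = b" using sig eta by (auto simp: s''_def)
    then show ?thesis using \<open>\<not> f b \<le> w\<close> by auto
  qed
  have s'I: "s' \<in> {a..b}" "f s' \<le> w" using s' S_def by auto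
  have "\<bar>f s'' - f s'\<bar> \<le> Lc*\<bar>s'' - s'\<bar> + J" using L s''1 s'I by auto
  moreover have "\<bar>s'' - s'\<bar> \<le> 2*\<eta>" using s' s'2 sig eta by (auto simp: s''_def)
  moreover have "Lc*\<bar>s'' - s'\<bar> \<le> Lc*(2*\<eta>)" using calculation(2) Lc by (rule mult_left_mono)
  ultimately have fin: "\<bar>f s' - w\<bar> \<le> J + 1" using s'I s''2 eta by argo
  show ?thesis using s'I(1) fin by blast
qed

lemma civt_rev:
  fixes f :: "real \<Rightarrow> real"
  assumes ab: "a \<le> b" and L: "\<forall>s\<in>{a..b}. \<forall>s'\<in>{a..b}. \<bar>f s - f s'\<bar> \<le> Lc*\<bar>s - s'\<bar> + J"
    and Lc: "0 \<le> Lc" and fa: "w \<le> f a" and fb: "f b \<le> w"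
  shows "\<exists>s\<in>{a..b}. \<bar>f s - w\<bar> \<le> J + 1"
proof -
  have "\<exists>s\<in>{a..b}. \<bar>(- f s) - (- w)\<bar> \<le> J + 1"
    by (rule civt[OF ab _ Lc]) (use L fa fb in \<open>auto simp: abs_minus_commute\<close>)
  then show ?thesis by (auto simp: abs_minus_commute)
qed

lemma bt_lower:
  fixes f :: "real \<Rightarrow> real"
  assumes ab: "a \<le> b" and K: "1 \<le> K" and J: "0 \<le> J"
   and L: "\<forall>s\<in>{a..b}. \<forall>s'\<in>{a..b}. \<bar>f s - f s'\<bar> \<le> K*\<bar>s - s'\<bar> + J"
   and E: "\<forall>s\<in>{a..b}. \<forall>s'\<in>{a..b}. \<bar>s - s'\<bar> \<le> K*(\<bar>f s - f s'\<bar> + J)"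
   and s: "s \<in> {a..b}"
  shows "min (f a) (f b) - (K*K*(3*J+2) + 4*J + 3) \<le> f s"
proof (rule ccontr)
  define B0 where "B0 = K*K*(3*J+2) + 4*J + 3"
  assume "\<not> ?thesis"
  then have fs: "f s < f a - B0" "f s < f b - B0" unfolding B0_def by auto
  have B0: "0 \<le> B0" using K J unfolding B0_def by (simp add: add_nonneg_nonneg)
  define w where "w = f s + B0/2"
  have L1: "\<forall>x\<in>{a..s}. \<forall>y\<in>{a..s}. \<bar>f x - f y\<bar> \<le> K*\<bar>x - y\<bar> + J" using L s by auto
  have L2: "\<forall>x\<in>{s..b}. \<forall>y\<in>{s..b}. \<bar>f x - f y\<bar> \<le> K*\<bar>x - y\<bar> + J" using L s by auto
  obtain s1 where s1: "s1 \<in> {a..s}" "\<bar>f s1 - w\<bar> \<le> J + 1"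
    using civt_rev[OF _ L1, of w] s fs B0 K unfolding w_def by auto
  obtain s2 where s2: "s2 \<in> {s..b}" "\<bar>f s2 - w\<bar> \<le> J + 1"
    using civt[OF _ L2, of w] s fs B0 K unfolding w_def by auto
  have i1: "s1 \<in> {a..b}" "s2 \<in> {a..b}" using s1 s2 s by auto
  have "\<bar>s1 - s2\<bar> \<le> K*(\<bar>f s1 - f s2\<bar> + J)" using E i1 by auto
  moreover have "\<bar>f s1 - f s2\<bar> + J \<le> 3*J + 2" using s1 s2 by argo
  moreover have "K*(\<bar>f s1 - f s2\<bar> + J) \<le> K*(3*J+2)" using calculation(2) K by (intro mult_left_mono) auto
  ultimately have "\<bar>s1 - s2\<bar> \<le> K*(3*J+2)" by linarith
  then have "K*\<bar>s1 - s2\<bar> \<le> K*(K*(3*J+2))" using K by (simp add: mult_left_mono)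
  moreover have "\<bar>s1 - s2\<bar> = s2 - s1" using s1 s2 by auto
  ultimately have kk: "K*(s2 - s1) \<le> K*(K*(3*J+2))" by simp
  moreover have ab1: "\<bar>s1 - s\<bar> = s - s1" "\<bar>s2 - s\<bar> = s2 - s" "\<bar>s1 - s2\<bar> = s2 - s1" using s1 s2 by auto
  moreover have "\<bar>f s1 - f s\<bar> \<le> K*\<bar>s1 - s\<bar> + J" "\<bar>f s2 - f s\<bar> \<le> K*\<bar>s2 - s\<bar> + J"
    using L i1 s by blast+
  ultimately have "\<bar>f s1 - f s\<bar> \<le> K*(s - s1) + J" "\<bar>f s2 - f s\<bar> \<le> K*(s2 - s) + J"
    by simp_all
  moreover have "K*(s2 - s1) = K*(s - s1) + K*(s2 - s)" by (simp add: algebra_simps)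
  moreover have "B0 = K*(K*(3*J+2)) + 4*J + 3" unfolding B0_def by (simp add: algebra_simps)
  ultimately show False using kk s1(2) s2(2) fs unfolding w_def by argo
qed

lemma bt_upper:
  fixes f :: "real \<Rightarrow> real"
  assumes ab: "a \<le> b" and K: "1 \<le> K" and J: "0 \<le> J"
   and L: "\<forall>s\<in>{a..b}. \<forall>s'\<in>{a..b}. \<bar>f s - f s'\<bar> \<le> K*\<bar>s - s'\<bar> + J"
   and E: "\<forall>s\<in>{a..b}. \<forall>s'\<in>{a..b}. \<bar>s - s'\<bar> \<le> K*(\<bar>f s - f s'\<bar> + J)"
   and s: "s \<in> {a..b}"
  shows "f s \<le> max (f a) (f b) + (K*K*(3*J+2) + 4*J + 3)"
proof -
  have "min (- f a) (- f b) - (K*K*(3*J+2) + 4*J + 3) \<le> - f s"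
    by (rule bt_lower[OF ab K J _ _ s, of "\<lambda>x. - f x"]) (use L E in \<open>auto simp: abs_minus_commute\<close>)
  then show ?thesis by linarith
qed

context Metric_space begin

lemma geo_exists:
  assumes "geodesic_mspace M d" "x \<in> M" "y \<in> M"
  obtains g where "isometric_on M d g {0..d x y}" "g 0 = x" "g (d x y) = y"
  using assms unfolding geodesic_mspace_def by meson

lemma proj3_morse:
  assumes G: "geodesic_mspace M d"
  and m: "morse M d N \<alpha> I" and aI: "\<alpha> ` I \<subseteq> M"
  and cI: "c \<in> \<alpha> ` I" and eI: "e \<in> \<alpha> ` I"
  and z: "isometric_on M d \<zeta> {\<sigma>1..\<sigma>}" "\<sigma>1 \<le> \<sigma>"
  and hc: "\<forall>t\<in>{\<sigma>1..\<sigma>}. d c (\<zeta> \<sigma>1) \<le> d c (\<zeta> t)"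
  and he: "\<forall>t\<in>{\<sigma>1..\<sigma>}. d e (\<zeta> \<sigma>) \<le> d e (\<zeta> t)"
  and Cc: "0 \<le> Cc"
  and cond: "2 * d c (\<zeta> \<sigma>1) \<le> Cc \<or> 2 * (d c (\<zeta> \<sigma>1) + d e (\<zeta> \<sigma>)) \<le> \<sigma> - \<sigma>1"
  and t: "t \<in> {\<sigma>1..\<sigma>}"
  shows "\<exists>u\<in>I. d (\<zeta> t) (\<alpha> u) \<le> N 3 Cc"
proof -
  have cM: "c \<in> M" "e \<in> M" using cI eI aI by auto
  have zM: "\<zeta> \<sigma>1 \<in> M" "\<zeta> \<sigma> \<in> M" using z iso_M by auto
  obtain g1 where g1: "isometric_on M d g1 {0..d c (\<zeta> \<sigma>1)}" "g1 0 = c" "g1 (d c (\<zeta> \<sigma>1)) = \<zeta> \<sigma>1"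
    using geo_exists[OF G cM(1) zM(1)] .
  obtain g3 where g3: "isometric_on M d g3 {0..d (\<zeta> \<sigma>) e}" "g3 0 = \<zeta> \<sigma>" "g3 (d (\<zeta> \<sigma>) e) = e"
    using geo_exists[OF G zM(2) cM(2)] .
  define A1 where "A1 = d c (\<zeta> \<sigma>1)"
  define C1 where "C1 = d (\<zeta> \<sigma>) e"
  have he': "\<forall>t\<in>{\<sigma>1..\<sigma>}. C1 \<le> d e (\<zeta> t)" using he commute C1_def by metis
  have cond': "2*A1 \<le> Cc \<or> 2*(A1+C1) \<le> \<sigma> - \<sigma>1" using cond commute A1_def C1_def by metis
  let ?q = "\<lambda>t. if t \<le> A1 then g1 t else if t \<le> A1 + (\<sigma>-\<sigma>1) then \<zeta> (\<sigma>1 + (t - A1)) else g3 (t - A1 - (\<sigma>-\<sigma>1))"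
  have Q: "quasigeodesic M d 3 Cc ?q 0 (A1 + (\<sigma> - \<sigma>1) + C1)"
    by (rule proj3_quasi[OF g1[folded A1_def] z g3[folded C1_def]])
       (use hc he' cond' Cc A1_def C1_def in auto)
  have A1: "0 \<le> A1" "0 \<le> C1" using A1_def C1_def by auto
  have q0: "?q 0 = c" using g1 A1 by auto
  have qT: "?q (A1 + (\<sigma> - \<sigma>1) + C1) = e"
  proof (cases "C1 = 0")
    case False
    then have "0 < C1" using A1 by auto
    then have "\<not> (A1 + (\<sigma> - \<sigma>1) + C1 \<le> A1)" "\<not> (A1 + (\<sigma> - \<sigma>1) + C1 \<le> A1 + (\<sigma> - \<sigma>1))"
      using z(2) by auto
    then show ?thesis using g3(3) C1_def by simp
  next
    case True
    show ?thesis
    proof (cases "\<sigma>1 = \<sigma>")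
      case True
      then show ?thesis using \<open>C1 = 0\<close> g1 g3 A1_def C1_def by auto
    next
      case False
      then show ?thesis using \<open>C1 = 0\<close> z(2) g3 A1_def C1_def by auto
    qed
  qed
  have qt: "?q (A1 + (t - \<sigma>1)) = \<zeta> t"
    using t g1 A1_def by auto
  have tT: "A1 + (t - \<sigma>1) \<in> {0..A1 + (\<sigma> - \<sigma>1) + C1}" using t A1 by auto
  show ?thesis using morse_apply[OF m _ Cc Q _ _ tT] q0 qT cI eI qt by auto
qed

lemma bi_quasi:
  assumes q: "quasigeodesic M d K C q a b" and K: "1 \<le> K" "0 \<le> C"
  and \<tau>: "\<tau> \<in> {a..b}" "\<forall>s\<in>{a..b}. d z (q \<tau>) \<le> d z (q s) + 1"
  and g: "isometric_on M d g {0..ll}" "g 0 = q \<tau>" "g ll = z" "ll = d (q \<tau>) z"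
  shows "quasigeodesic M d (3*K) (C+1) (\<lambda>t. if t \<le> \<tau> then q t else g (t - \<tau>)) a (\<tau> + ll)"
    (is "quasigeodesic M d _ _ ?p _ _")
proof -
  have l0: "0 \<le> ll" using g by simp
  have zM: "z \<in> M" using g l0 iso_M[OF g(1), of ll] by auto
  have qM: "q s \<in> M" if "s \<in> {a..b}" for s using q that by (rule quasi_M)
  have Q: "\<bar>s - t\<bar> / K - C \<le> d (q s) (q t) \<and> d (q s) (q t) \<le> K * \<bar>s - t\<bar> + C" if "s \<in> {a..b}" "t \<in> {a..b}" for s t
    using q that unfolding quasigeodesic_def by auto
  have gM: "g y \<in> M" "d (q \<tau>) (g y) = y" "d (g y) z = ll - y" if "y \<in> {0..ll}" for y
    using iso_M[OF g(1) that] iso_d[OF g(1), of 0 y] iso_d[OF g(1), of y ll] that g by auto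
  have divK: "x / (3*K) \<le> x / K" "x / (3*K) = (x/K)/3" if "0 \<le> x" for x
    using K that by (auto simp: field_simps)
  have key: "(t - s) / (3*K) - (C+1) \<le> d (?p s) (?p t) \<and> d (?p s) (?p t) \<le> 3*K*(t - s) + (C+1)"
    if s: "s \<in> {a..\<tau>+ll}" and t: "t \<in> {a..\<tau>+ll}" and st: "s \<le> t" for s t
  proof (cases "t \<le> \<tau>")
    case True
    then have e: "?p s = q s" "?p t = q t" using st by auto
    have st': "s \<in> {a..b}" "t \<in> {a..b}" using s t True \<tau> st by auto
    have "\<bar>s - t\<bar> = t - s" using st by auto
    moreover have "(t - s) / (3*K) \<le> (t-s)/K" using divK(1)[of "t-s"] st by simp
    moreover have "K*(t - s) \<le> 3*K*(t-s)" using K st by (simp add: mult_right_mono)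
    moreover have "(t-s)/K - C \<le> d (q s) (q t) \<and> d (q s) (q t) \<le> K*(t-s) + C"
      using Q[OF st'] \<open>\<bar>s - t\<bar> = t - s\<close> by simp
    ultimately show ?thesis unfolding e by argo
  next
    case False
    then have tt: "t - \<tau> \<in> {0..ll}" using t by auto
    show ?thesis
    proof (cases "s \<le> \<tau>")
      case True
      then have e: "?p s = q s" "?p t = g (t - \<tau>)" using False by auto
      have sI: "s \<in> {a..b}" using s True \<tau> by auto
      define x where "x = \<tau> - s"
      define y where "y = t - \<tau>"
      have xy: "0 \<le> x" "0 \<le> y" "y \<le> ll" "t - s = x + y" using True False tt x_def y_def by auto
      have g1: "g y \<in> M" "d (q \<tau>) (g y) = y" "d (g y) z = ll - y" using gM tt y_def by auto
      have qt: "q \<tau> \<in> M" "q s \<in> M" using qM \<tau> sI by auto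
      have h1: "d (q s) z \<le> d (q s) (g y) + d (g y) z" using triangle[OF qt(2) g1(1) zM] .
      have h2: "d z (q \<tau>) \<le> d z (q s) + 1" using \<tau> sI by auto
      have h3: "d (q s) (q \<tau>) \<le> d (q s) (g y) + d (g y) (q \<tau>)" using triangle[OF qt(2) g1(1) qt(1)] .
      have h4: "d (q s) (g y) \<le> d (q s) (q \<tau>) + d (q \<tau>) (g y)" using triangle[OF qt(2) qt(1) g1(1)] .
      have Qs: "x / K - C \<le> d (q s) (q \<tau>) \<and> d (q s) (q \<tau>) \<le> K * x + C"
        using Q[OF sI \<tau>(1)] xy x_def by auto
      have c1: "(t - s) / (3*K) \<le> (x/K)/3 + y/3"
      proof -
        have "(t - s)/(3*K) = x/(3*K) + y/(3*K)" using xy by (simp add: add_divide_distrib)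
        moreover have "y/(3*K) \<le> y/3" using K xy by (intro frac_le) auto
        ultimately show ?thesis using divK xy by auto
      qed
      have c2: "K*x + C + y \<le> 3*K*(t-s) + (C+1)"
      proof -
        have "K*x \<le> 3*K*x" using K xy by (auto simp: mult_right_mono)
        moreover have "1*y \<le> (3*K)*y" using K xy by (intro mult_right_mono) auto
        ultimately have "K*x \<le> 3*K*x" "y \<le> 3*K*y" by auto
        then show ?thesis using xy by (simp add: algebra_simps)
      qed
      have cm: "d z (q \<tau>) = d (q \<tau>) z" "d z (q s) = d (q s) z" "d (g y) (q \<tau>) = y" using commute g1 by auto
      have l: "(t - s) / (3*K) - (C+1) \<le> d (q s) (g y)"
        using h1 h2 h3 Qs c1 cm g1 g(4) xy K by argo
      have u: "d (q s) (g y) \<le> 3*K*(t - s) + (C+1)" using h4 Qs c2 g1 by argo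
      show ?thesis using l u unfolding e y_def by auto
    next
      case False2: False
      then have e: "?p s = g (s - \<tau>)" "?p t = g (t - \<tau>)" using False by auto
      have ss: "s - \<tau> \<in> {0..ll}" using s False2 by auto
      have "d (g (s - \<tau>)) (g (t - \<tau>)) = t - s" using iso_d[OF g(1) ss tt] st by auto
      moreover have "(t - s) / (3*K) \<le> (t-s)/K" using divK(1)[of "t-s"] st by simp
      moreover have "(t-s)/K \<le> t - s" using st K by (simp add: divide_le_eq mult_le_cancel_left1 mult_right_mono)
      moreover have "1*(t - s) \<le> (3*K)*(t-s)" using K st by (intro mult_right_mono) auto
      ultimately show ?thesis unfolding e using K by argo
    qed
  qed
  show ?thesis
    unfolding quasigeodesic_def
  proof (intro conjI ballI)
    show "a \<le> \<tau> + ll" using \<tau> l0 by auto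
    show "?p ` {a..\<tau> + ll} \<subseteq> M"
    proof (rule image_subsetI)
      fix t assume "t \<in> {a..\<tau> + ll}"
      then show "?p t \<in> M" using qM gM \<tau> by auto
    qed
    fix s t assume s: "s \<in> {a..\<tau> + ll}" and t: "t \<in> {a..\<tau> + ll}"
    have "\<bar>s - t\<bar> / (3*K) - (C+1) \<le> d (?p s) (?p t) \<and> d (?p s) (?p t) \<le> 3*K * \<bar>s - t\<bar> + (C+1)"
    proof (cases "s \<le> t")
      case True then show ?thesis using key[OF s t] by auto
    next
      case False then show ?thesis using key[OF t s] commute[of "?p s" "?p t"] by auto
    qed
    then show "\<bar>s - t\<bar> / (3*K) - (C+1) \<le> d (?p s) (?p t)" "d (?p s) (?p t) \<le> 3*K * \<bar>s - t\<bar> + (C+1)" by auto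
  qed
qed

end

lemma cov_arith:
  fixes G1 G2 ul uh w m :: real
  assumes "\<bar>G1 - ul\<bar> \<le> m" "\<bar>G2 - uh\<bar> \<le> m" "min ul uh \<le> w" "w \<le> max ul uh"
  shows "(min G1 G2 \<le> w \<and> w \<le> max G1 G2) \<or> \<bar>w - ul\<bar> \<le> m \<or> \<bar>w - uh\<bar> \<le> m"
  using assms by (auto simp: min_def max_def abs_if split: if_splits)

definition Rcov :: "(real \<Rightarrow> real \<Rightarrow> real) \<Rightarrow> real \<Rightarrow> real" where
  "Rcov N \<rho> = 3 * (N 1 (2*\<rho>) + \<rho>) + 2*\<rho> + 1"

definition RSS :: "(real \<Rightarrow> real \<Rightarrow> real) \<Rightarrow> real \<Rightarrow> real \<Rightarrow> real \<Rightarrow> real" where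
  "RSS N K C \<rho> = (N K (C + 2*\<rho>) + \<rho>) + Rcov N \<rho> +
     (2*(N K (C + 2*\<rho>) + \<rho>) + (K*K*(3*(C + 2*(N K (C + 2*\<rho>) + \<rho>))+2) + 4*(C + 2*(N K (C + 2*\<rho>) + \<rho>)) + 3) + 2*\<rho>)"

context Metric_space begin

lemma cov:
  assumes mg: "morse_gauge N" and m: "morse M d N \<alpha> {0..A}" and ai: "isometric_on M d \<alpha> {0..A}"
    and g: "isometric_on M d \<gamma> UNIV" and lh: "lo \<le> hi" and \<rho>: "0 \<le> \<rho>"
    and u: "ul \<in> {0..A}" "uh \<in> {0..A}" "d (\<gamma> lo) (\<alpha> ul) \<le> \<rho>" "d (\<gamma> hi) (\<alpha> uh) \<le> \<rho>"
    and w: "min ul uh \<le> w" "w \<le> max ul uh"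
  shows "\<exists>t\<in>{lo..hi}. d (\<alpha> w) (\<gamma> t) \<le> Rcov N \<rho>"
proof -
  define m1 where "m1 = N 1 (2*\<rho>) + \<rho>"
  have m1: "0 \<le> m1" using mg \<rho> unfolding m1_def morse_gauge_def by auto
  have aM: "\<alpha> ` {0..A} \<subseteq> M" using ai unfolding isometric_on_def by auto
  have gq: "quasigeodesic M d 1 0 \<gamma> lo hi" using iso_quasi[OF iso_sub[OF g] lh] by auto
  have P: "\<exists>v\<in>{0..A}. d (\<gamma> t) (\<alpha> v) \<le> m1" if "t \<in> {lo..hi}" for t
    using morse_perturb[OF m _ _ gq u aM that] unfolding m1_def by auto
  define g where "g = (\<lambda>t. SOME v. v \<in> {0..A} \<and> d (\<gamma> t) (\<alpha> v) \<le> m1)"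
  have gP: "g t \<in> {0..A} \<and> d (\<gamma> t) (\<alpha> (g t)) \<le> m1" if "t \<in> {lo..hi}" for t
    unfolding g_def by (rule someI_ex) (use P[OF that] in blast)
  have gM: "\<gamma> t \<in> M" for t using g iso_M by blast
  have aMv: "\<alpha> v \<in> M" if "v \<in> {0..A}" for v using aM that by auto
  have ad: "d (\<alpha> v) (\<alpha> v') = \<bar>v - v'\<bar>" if "v \<in> {0..A}" "v' \<in> {0..A}" for v v'
    using iso_d[OF ai that] .
  have Lg: "\<forall>s\<in>{lo..hi}. \<forall>s'\<in>{lo..hi}. \<bar>g s - g s'\<bar> \<le> 1*\<bar>s - s'\<bar> + 2*m1"
  proof (intro ballI)
    fix s s' assume s: "s \<in> {lo..hi}" and s': "s' \<in> {lo..hi}"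
    have "d (\<alpha> (g s)) (\<alpha> (g s')) \<le> d (\<alpha> (g s)) (\<gamma> s) + d (\<gamma> s) (\<gamma> s') + d (\<gamma> s') (\<alpha> (g s'))"
      using triangle[OF aMv[of "g s"] gM[of s] aMv[of "g s'"]] triangle[OF gM[of s] gM[of s'] aMv[of "g s'"]] gP s s' by fastforce
    moreover have "d (\<gamma> s) (\<gamma> s') = \<bar>s - s'\<bar>" using iso_d[OF g] by auto
    moreover have "d (\<alpha> (g s)) (\<gamma> s) \<le> m1" using gP[OF s] commute by metis
    ultimately show "\<bar>g s - g s'\<bar> \<le> 1*\<bar>s - s'\<bar> + 2*m1" using gP[OF s] gP[OF s'] ad by force
  qed
  have G1: "\<bar>g lo - ul\<bar> \<le> m1 + \<rho>"
  proof -
    have "d (\<alpha> (g lo)) (\<alpha> ul) \<le> d (\<alpha> (g lo)) (\<gamma> lo) + d (\<gamma> lo) (\<alpha> ul)"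
      using triangle[OF aMv gM aMv] gP[of lo] lh u by auto
    then show ?thesis using gP[of lo] lh u ad commute[of "\<alpha> (g lo)" "\<gamma> lo"] by force
  qed
  have G2: "\<bar>g hi - uh\<bar> \<le> m1 + \<rho>"
  proof -
    have "d (\<alpha> (g hi)) (\<alpha> uh) \<le> d (\<alpha> (g hi)) (\<gamma> hi) + d (\<gamma> hi) (\<alpha> uh)"
      using triangle[OF aMv gM aMv] gP[of hi] lh u by auto
    then show ?thesis using gP[of hi] lh u ad commute[of "\<alpha> (g hi)" "\<gamma> hi"] by force
  qed
  have wA: "w \<in> {0..A}" using u w by auto
  have close: "d (\<alpha> w) (\<gamma> t) \<le> Rcov N \<rho>" if t: "t \<in> {lo..hi}" "\<bar>g t - w\<bar> \<le> 2*m1 + 1" for t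
  proof -
    have "d (\<alpha> w) (\<gamma> t) \<le> d (\<alpha> w) (\<alpha> (g t)) + d (\<alpha> (g t)) (\<gamma> t)"
      using triangle[OF aMv[OF wA] aMv gM] gP[OF t(1)] by auto
    then show ?thesis using t gP[OF t(1)] ad[OF wA] commute[of "\<alpha> (g t)" "\<gamma> t"] m1 \<rho>
      unfolding Rcov_def m1_def[symmetric] by (smt (verit, best) abs_minus_commute)
  qed
  have near: "d (\<alpha> w) (\<gamma> t) \<le> Rcov N \<rho>" if t: "t \<in> {lo..hi}" "\<bar>w - v\<bar> \<le> m1 + \<rho>" "v \<in> {0..A}" "d (\<gamma> t) (\<alpha> v) \<le> \<rho>" for t v
  proof -
    have "d (\<alpha> w) (\<gamma> t) \<le> d (\<alpha> w) (\<alpha> v) + d (\<alpha> v) (\<gamma> t)"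
      using triangle[OF aMv[OF wA] aMv[OF t(3)] gM] by auto
    then show ?thesis using t ad[OF wA t(3)] commute[of "\<alpha> v" "\<gamma> t"] m1 \<rho>
      unfolding Rcov_def m1_def[symmetric] by linarith
  qed
  have lohi: "lo \<in> {lo..hi}" "hi \<in> {lo..hi}" using lh by auto
  consider "min (g lo) (g hi) \<le> w \<and> w \<le> max (g lo) (g hi)" | "\<bar>w - ul\<bar> \<le> m1 + \<rho>" | "\<bar>w - uh\<bar> \<le> m1 + \<rho>"
    using cov_arith[OF G1 G2 w] by blast
  then show ?thesis
  proof cases
    case 1
    then consider "g lo \<le> w" "w \<le> g hi" | "g hi \<le> w" "w \<le> g lo" by linarith
    then obtain t where "t \<in> {lo..hi}" "\<bar>g t - w\<bar> \<le> 2*m1 + 1"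
    proof cases
      case 1
      then show ?thesis using civt[OF lh Lg _ 1] that by auto
    next
      case 2
      then show ?thesis using civt_rev[OF lh Lg _ 2(2) 2(1)] that by auto
    qed
    then show ?thesis using close by blast
  next
    case 2 then show ?thesis using near[OF lohi(1) 2 u(1) u(3)] lohi by blast
  next
    case 3 then show ?thesis using near[OF lohi(2) 3 u(2) u(4)] lohi by blast
  qed
qed


lemma same_side:
  assumes mg: "morse_gauge N" and m: "morse M d N \<alpha> {0..A}" and ai: "isometric_on M d \<alpha> {0..A}"
    and g: "isometric_on M d \<gamma> UNIV" and \<rho>: "0 \<le> \<rho>"
    and q: "quasigeodesic M d K C q a b" and K: "1 \<le> K" "0 \<le> C"
    and qa: "q a = \<gamma> s1" and qb: "q b = \<gamma> s2"
    and u: "u1 \<in> {0..A}" "u2 \<in> {0..A}" "d (\<gamma> s1) (\<alpha> u1) \<le> \<rho>" "d (\<gamma> s2) (\<alpha> u2) \<le> \<rho>"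
    and s: "s \<in> {a..b}"
  shows "\<exists>t. d (q s) (\<gamma> t) \<le> RSS N K C \<rho>"
proof -
  define m where "m = N K (C + 2*\<rho>) + \<rho>"
  define J where "J = C + 2*m"
  define B0 where "B0 = K*K*(3*J+2) + 4*J + 3"
  have m0: "0 \<le> m" using mg \<rho> K unfolding m_def morse_gauge_def by auto
  have J0: "0 \<le> J" using m0 K unfolding J_def by auto
  have B00: "0 \<le> B0" using J0 K unfolding B0_def by (simp add: add_nonneg_nonneg)
  have Rc: "0 \<le> Rcov N \<rho>" using mg \<rho> unfolding Rcov_def morse_gauge_def by (smt (verit) one_le_numeral)
  have R: "RSS N K C \<rho> = m + Rcov N \<rho> + (2*m + B0 + 2*\<rho>)" unfolding RSS_def m_def B0_def J_def by simp
  have ab: "a \<le> b" using q unfolding quasigeodesic_def by auto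
  have aM: "\<alpha> ` {0..A} \<subseteq> M" using ai unfolding isometric_on_def by auto
  have qu: "d (q a) (\<alpha> u1) \<le> \<rho>" "d (q b) (\<alpha> u2) \<le> \<rho>" using u qa qb by auto
  have P: "\<exists>v\<in>{0..A}. d (q t) (\<alpha> v) \<le> m" if "t \<in> {a..b}" for t
    using morse_perturb[OF m K q u(1,2) qu aM that] unfolding m_def by auto
  define f where "f = (\<lambda>t. SOME v. v \<in> {0..A} \<and> d (q t) (\<alpha> v) \<le> m)"
  have fP: "f t \<in> {0..A} \<and> d (q t) (\<alpha> (f t)) \<le> m" if "t \<in> {a..b}" for t
    unfolding f_def by (rule someI_ex) (use P[OF that] in blast)
  have qM: "q t \<in> M" if "t \<in> {a..b}" for t using q that by (rule quasi_M)
  have gM: "\<gamma> t \<in> M" for t using g iso_M by blast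
  have aMv: "\<alpha> v \<in> M" if "v \<in> {0..A}" for v using aM that by auto
  have ad: "d (\<alpha> v) (\<alpha> v') = \<bar>v - v'\<bar>" if "v \<in> {0..A}" "v' \<in> {0..A}" for v v'
    using iso_d[OF ai that] .
  have Q: "\<bar>t - t'\<bar> / K - C \<le> d (q t) (q t') \<and> d (q t) (q t') \<le> K * \<bar>t - t'\<bar> + C"
    if "t \<in> {a..b}" "t' \<in> {a..b}" for t t'
    using q that unfolding quasigeodesic_def by auto
  have tri_f: "d (\<alpha> (f t)) (\<alpha> (f t')) \<le> m + d (q t) (q t') + m \<and> d (q t) (q t') \<le> m + d (\<alpha> (f t)) (\<alpha> (f t')) + m"
    if t: "t \<in> {a..b}" "t' \<in> {a..b}" for t t'
  proof -
    have f1: "f t \<in> {0..A}" "f t' \<in> {0..A}" using fP t by auto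
    have x1: "d (\<alpha> (f t)) (\<alpha> (f t')) \<le> d (\<alpha> (f t)) (q t) + d (q t) (q t') + d (q t') (\<alpha> (f t'))"
      using triangle[OF aMv[OF f1(1)] qM[OF t(1)] aMv[OF f1(2)]] triangle[OF qM[OF t(1)] qM[OF t(2)] aMv[OF f1(2)]] by linarith
    have x2: "d (q t) (q t') \<le> d (q t) (\<alpha> (f t)) + d (\<alpha> (f t)) (\<alpha> (f t')) + d (\<alpha> (f t')) (q t')"
      using triangle[OF qM[OF t(1)] aMv[OF f1(1)] qM[OF t(2)]] triangle[OF aMv[OF f1(1)] aMv[OF f1(2)] qM[OF t(2)]] by linarith
    show ?thesis using x1 x2 fP[OF t(1)] fP[OF t(2)] commute[of "\<alpha> (f t)" "q t"] commute[of "\<alpha> (f t')" "q t'"] by linarith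
  qed
  have Lf: "\<forall>t\<in>{a..b}. \<forall>t'\<in>{a..b}. \<bar>f t - f t'\<bar> \<le> K*\<bar>t - t'\<bar> + J"
  proof (intro ballI)
    fix t t' assume t: "t \<in> {a..b}" "t' \<in> {a..b}"
    show "\<bar>f t - f t'\<bar> \<le> K*\<bar>t - t'\<bar> + J"
      using tri_f[OF t] Q[OF t] ad fP[OF t(1)] fP[OF t(2)] unfolding J_def by force
  qed
  have Ef: "\<forall>t\<in>{a..b}. \<forall>t'\<in>{a..b}. \<bar>t - t'\<bar> \<le> K*(\<bar>f t - f t'\<bar> + J)"
  proof (intro ballI)
    fix t t' assume t: "t \<in> {a..b}" "t' \<in> {a..b}"
    have "\<bar>t - t'\<bar> / K \<le> \<bar>f t - f t'\<bar> + J"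
      using tri_f[OF t] Q[OF t] ad fP[OF t(1)] fP[OF t(2)] unfolding J_def by force
    then have "K * (\<bar>t - t'\<bar> / K) \<le> K * (\<bar>f t - f t'\<bar> + J)" using K by (intro mult_left_mono) auto
    then show "\<bar>t - t'\<bar> \<le> K*(\<bar>f t - f t'\<bar> + J)" using K by simp
  qed
  have low: "min (f a) (f b) - B0 \<le> f s" unfolding B0_def by (rule bt_lower[OF ab K(1) J0 Lf Ef s])
  have up: "f s \<le> max (f a) (f b) + B0" unfolding B0_def by (rule bt_upper[OF ab K(1) J0 Lf Ef s])
  have Fend: "\<bar>f t - uu\<bar> \<le> m + \<rho>" if "t \<in> {a..b}" "uu \<in> {0..A}" "d (q t) (\<alpha> uu) \<le> \<rho>" for t uu
  proof -
    have "d (\<alpha> (f t)) (\<alpha> uu) \<le> d (\<alpha> (f t)) (q t) + d (q t) (\<alpha> uu)"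
      using triangle[OF aMv qM aMv] fP that by auto
    then show ?thesis using fP[OF that(1)] that ad commute[of "\<alpha> (f t)" "q t"] by force
  qed
  have sa: "a \<in> {a..b}" "b \<in> {a..b}" using ab by auto
  have Fa: "\<bar>f a - u1\<bar> \<le> m + \<rho>" using Fend[OF sa(1) u(1) qu(1)] .
  have Fb: "\<bar>f b - u2\<bar> \<le> m + \<rho>" using Fend[OF sa(2) u(2) qu(2)] .
  define v where "v = f s"
  have vA: "v \<in> {0..A}" "d (q s) (\<alpha> v) \<le> m" using fP[OF s] v_def by auto
  have near: "\<exists>t. d (q s) (\<gamma> t) \<le> RSS N K C \<rho>"
    if "uu \<in> {0..A}" "d (\<gamma> ss) (\<alpha> uu) \<le> \<rho>" "\<bar>v - uu\<bar> \<le> m + \<rho> + B0" for uu ss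
  proof -
    have "d (q s) (\<gamma> ss) \<le> d (q s) (\<alpha> v) + d (\<alpha> v) (\<alpha> uu) + d (\<alpha> uu) (\<gamma> ss)"
      using triangle[OF qM[OF s] aMv[OF vA(1)] gM[of ss]] triangle[OF aMv[OF vA(1)] aMv[OF that(1)] gM[of ss]] by linarith
    then show ?thesis using vA that ad[OF vA(1) that(1)] commute[of "\<alpha> uu" "\<gamma> ss"] Rc m0 unfolding R by (intro exI[of _ ss]) linarith
  qed
  have arith: "(min u1 u2 \<le> v \<and> v \<le> max u1 u2) \<or> \<bar>v - u1\<bar> \<le> m + \<rho> + B0 \<or> \<bar>v - u2\<bar> \<le> m + \<rho> + B0"
    using Fa Fb low up unfolding v_def by (auto simp: min_def max_def abs_if split: if_splits)
  then show ?thesis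
  proof (elim disjE)
    assume vm: "min u1 u2 \<le> v \<and> v \<le> max u1 u2"
    obtain t where t: "d (\<alpha> v) (\<gamma> t) \<le> Rcov N \<rho>"
    proof (cases "s1 \<le> s2")
      case True
      then show ?thesis using cov[OF mg m ai g True \<rho> u(1) u(2) u(3) u(4)] vm that by auto
    next
      case False
      then have "s2 \<le> s1" by auto
      then show ?thesis using cov[OF mg m ai g _ \<rho> u(2) u(1) u(4) u(3)] vm that by (auto simp: min.commute max.commute)
    qed
    have "d (q s) (\<gamma> t) \<le> d (q s) (\<alpha> v) + d (\<alpha> v) (\<gamma> t)" using triangle[OF qM[OF s] aMv[OF vA(1)] gM] .
    then show ?thesis using t vA m0 Rc B00 \<rho> unfolding R by (intro exI[of _ t]) linarith
  next
    assume "\<bar>v - u1\<bar> \<le> m + \<rho> + B0" then show ?thesis using near u by blast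
  next
    assume "\<bar>v - u2\<bar> \<le> m + \<rho> + B0" then show ?thesis using near u by blast
  qed
qed

end

definition NP :: "(real \<Rightarrow> real \<Rightarrow> real) \<Rightarrow> real \<Rightarrow> real \<Rightarrow> real \<Rightarrow> real" where
  "NP N \<rho> K C = max (RSS N K C \<rho>) (RSS N (3*K) (C+1) \<rho>)"

context Metric_space begin

lemma quasi_reverse:
  assumes "quasigeodesic M d K C q a b"
  shows "quasigeodesic M d K C (\<lambda>t. q (a + b - t)) a b"
  using assms unfolding quasigeodesic_def
  apply (intro conjI ballI)
  subgoal by auto
  subgoal by (auto simp: image_subset_iff)
  subgoal for s t
    by (drule conjunct2, drule conjunct2, drule bspec[of _ _ "a+b-s"], simp,
        drule bspec[of _ _ "a+b-t"], simp) (simp add: abs_minus_commute)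
  subgoal for s t
    by (drule conjunct2, drule conjunct2, drule bspec[of _ _ "a+b-s"], simp,
        drule bspec[of _ _ "a+b-t"], simp) (simp add: abs_minus_commute)
  done

lemma mixed_case:
  assumes mg: "morse_gauge N" and G: "geodesic_mspace M d"
    and g: "isometric_on M d \<gamma> UNIV" and \<rho>: "0 \<le> \<rho>"
    and HX: "\<And>s1 s2. s1 \<le> 0 \<Longrightarrow> s2 \<le> 0 \<Longrightarrow> \<exists>\<alpha> A u1 u2. morse M d N \<alpha> {0..A} \<and> isometric_on M d \<alpha> {0..A} \<and>
              u1 \<in> {0..A} \<and> u2 \<in> {0..A} \<and> d (\<gamma> s1) (\<alpha> u1) \<le> \<rho> \<and> d (\<gamma> s2) (\<alpha> u2) \<le> \<rho>"
    and HY: "\<And>s1 s2. 0 \<le> s1 \<Longrightarrow> 0 \<le> s2 \<Longrightarrow> \<exists>\<alpha> A u1 u2. morse M d N \<alpha> {0..A} \<and> isometric_on M d \<alpha> {0..A} \<and>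
              u1 \<in> {0..A} \<and> u2 \<in> {0..A} \<and> d (\<gamma> s1) (\<alpha> u1) \<le> \<rho> \<and> d (\<gamma> s2) (\<alpha> u2) \<le> \<rho>"
    and q: "quasigeodesic M d K C q a b" and K: "1 \<le> K" "0 \<le> C"
    and qa: "q a = \<gamma> s1" and qb: "q b = \<gamma> s2" and s12: "s1 \<le> 0" "0 \<le> s2"
    and s: "s \<in> {a..b}"
  shows "\<exists>t. d (q s) (\<gamma> t) \<le> RSS N (3*K) (C+1) \<rho>"
proof -
  define z where "z = \<gamma> 0"
  have zM: "z \<in> M" using g iso_M z_def by blast
  have ab: "a \<le> b" using q unfolding quasigeodesic_def by auto
  have qM: "q t \<in> M" if "t \<in> {a..b}" for t using q that by (rule quasi_M)
  define S where "S = (\<lambda>t. d z (q t)) ` {a..b}"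
  have Sne: "S \<noteq> {}" using ab S_def by auto
  have Sbdd: "bdd_below S" unfolding S_def by (rule bdd_belowI[of _ 0]) auto
  obtain y where y: "y \<in> S" "y < Inf S + 1" using cInf_lessD[OF Sne, of "Inf S + 1"] by auto
  obtain \<tau> where \<tau>: "\<tau> \<in> {a..b}" "d z (q \<tau>) < Inf S + 1" using y S_def by auto
  have inf: "Inf S \<le> d z (q t)" if "t \<in> {a..b}" for t using cInf_lower[OF _ Sbdd] that S_def by auto
  have tau: "\<forall>t\<in>{a..b}. d z (q \<tau>) \<le> d z (q t) + 1" using inf \<tau> by force
  have K3: "1 \<le> 3*K" "0 \<le> C+1" using K by auto
  have half: "\<exists>t. d (q s) (\<gamma> t) \<le> RSS N (3*K) (C+1) \<rho>"
    if q: "quasigeodesic M d K C q a b" and qa: "q a = \<gamma> s1" and tau: "\<forall>t\<in>{a..b}. d z (q \<tau>) \<le> d z (q t) + 1"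
       and \<tau>: "\<tau> \<in> {a..b}" and s: "s \<in> {a..\<tau>}"
       and H: "\<exists>\<alpha> A u1 u2. morse M d N \<alpha> {0..A} \<and> isometric_on M d \<alpha> {0..A} \<and>
              u1 \<in> {0..A} \<and> u2 \<in> {0..A} \<and> d (\<gamma> s1) (\<alpha> u1) \<le> \<rho> \<and> d (\<gamma> 0) (\<alpha> u2) \<le> \<rho>"
     for q s1 \<tau> s
  proof -
    have qt: "q \<tau> \<in> M" using q \<tau> by (rule quasi_M)
    obtain gg where gg: "isometric_on M d gg {0..d (q \<tau>) z}" "gg 0 = q \<tau>" "gg (d (q \<tau>) z) = z"
      using geo_exists[OF G qt zM] .
    define ll where "ll = d (q \<tau>) z"
    have P: "quasigeodesic M d (3*K) (C+1) (\<lambda>t. if t \<le> \<tau> then q t else gg (t - \<tau>)) a (\<tau> + ll)"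
      by (rule bi_quasi[OF q K \<tau> tau gg[folded ll_def] ll_def])
    have pa: "(\<lambda>t. if t \<le> \<tau> then q t else gg (t - \<tau>)) a = \<gamma> s1" using \<tau> qa by auto
    have pb: "(\<lambda>t. if t \<le> \<tau> then q t else gg (t - \<tau>)) (\<tau> + ll) = \<gamma> 0"
    proof (cases "ll = 0")
      case True then show ?thesis using gg ll_def z_def by auto
    next
      case False then have "0 < ll" using ll_def by (simp add: order_less_le)
      then show ?thesis using gg ll_def z_def by auto
    qed
    obtain \<alpha> A u1 u2 where H': "morse M d N \<alpha> {0..A}" "isometric_on M d \<alpha> {0..A}"
      "u1 \<in> {0..A}" "u2 \<in> {0..A}" "d (\<gamma> s1) (\<alpha> u1) \<le> \<rho>" "d (\<gamma> 0) (\<alpha> u2) \<le> \<rho>" using H by blast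
    have h0: "0 \<le> d (q \<tau>) z" by simp
    have h1: "a \<le> s" "s \<le> \<tau>" using s by auto
    have sI: "s \<in> {a..\<tau> + ll}" unfolding atLeastAtMost_iff using h0 h1 ll_def by linarith
    obtain t where "d ((\<lambda>t. if t \<le> \<tau> then q t else gg (t - \<tau>)) s) (\<gamma> t) \<le> RSS N (3*K) (C+1) \<rho>"
      using same_side[OF mg H'(1,2) g \<rho> P K3 pa pb H'(3,4,5,6) sI] by blast
    then show ?thesis using s by auto
  qed
  show ?thesis
  proof (cases "s \<le> \<tau>")
    case True
    then have sI: "s \<in> {a..\<tau>}" using s by auto
    show ?thesis using half[OF q qa tau \<tau>(1) sI HX[OF s12(1) order_refl]] .
  next
    case False
    define rq where "rq = (\<lambda>t. q (a + b - t))"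
    have rqq: "quasigeodesic M d K C rq a b" unfolding rq_def by (rule quasi_reverse[OF q])
    have rqa: "rq a = \<gamma> s2" using qb rq_def by simp
    have rtau: "\<forall>t\<in>{a..b}. d z (rq (a + b - \<tau>)) \<le> d z (rq t) + 1" using tau unfolding rq_def by auto
    have rt: "a + b - \<tau> \<in> {a..b}" using \<tau> by auto
    have rs: "a + b - s \<in> {a..a + b - \<tau>}" using s False by auto
    obtain t where "d (rq (a + b - s)) (\<gamma> t) \<le> RSS N (3*K) (C+1) \<rho>"
      using half[OF rqq rqa rtau rt rs HY[OF s12(2) order_refl]] by blast
    then show ?thesis unfolding rq_def by auto
  qed
qed


lemma gamma_morse:
  assumes mg: "morse_gauge N" and G: "geodesic_mspace M d"
    and g: "isometric_on M d \<gamma> UNIV" and \<rho>: "0 \<le> \<rho>"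
    and HX: "\<And>s1 s2. s1 \<le> 0 \<Longrightarrow> s2 \<le> 0 \<Longrightarrow> \<exists>\<alpha> A u1 u2. morse M d N \<alpha> {0..A} \<and> isometric_on M d \<alpha> {0..A} \<and>
              u1 \<in> {0..A} \<and> u2 \<in> {0..A} \<and> d (\<gamma> s1) (\<alpha> u1) \<le> \<rho> \<and> d (\<gamma> s2) (\<alpha> u2) \<le> \<rho>"
    and HY: "\<And>s1 s2. 0 \<le> s1 \<Longrightarrow> 0 \<le> s2 \<Longrightarrow> \<exists>\<alpha> A u1 u2. morse M d N \<alpha> {0..A} \<and> isometric_on M d \<alpha> {0..A} \<and>
              u1 \<in> {0..A} \<and> u2 \<in> {0..A} \<and> d (\<gamma> s1) (\<alpha> u1) \<le> \<rho> \<and> d (\<gamma> s2) (\<alpha> u2) \<le> \<rho>"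
  shows "morse M d (NP N \<rho>) \<gamma> UNIV"
  unfolding morse_def
proof (intro allI impI subsetI)
  fix K C q a b x
  assume K: "1 \<le> K" and C: "0 \<le> C" and q: "quasigeodesic M d K C q a b"
    and qa: "q a \<in> \<gamma> ` UNIV" and qb: "q b \<in> \<gamma> ` UNIV" and x: "x \<in> q ` {a..b}"
  obtain s where s: "s \<in> {a..b}" "x = q s" using x by auto
  obtain s1 s2 where s12: "q a = \<gamma> s1" "q b = \<gamma> s2" using qa qb by auto
  have xM: "x \<in> M" using q s quasi_M by auto
  have "\<exists>t. d (q s) (\<gamma> t) \<le> NP N \<rho> K C"
  proof -
    consider "s1 \<le> 0" "s2 \<le> 0" | "0 \<le> s1" "0 \<le> s2" | "s1 \<le> 0" "0 \<le> s2" | "0 \<le> s1" "s2 \<le> 0" by linarith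
    then show ?thesis
    proof cases
      case 1
      then obtain \<alpha> A u1 u2 where H: "morse M d N \<alpha> {0..A}" "isometric_on M d \<alpha> {0..A}"
        "u1 \<in> {0..A}" "u2 \<in> {0..A}" "d (\<gamma> s1) (\<alpha> u1) \<le> \<rho>" "d (\<gamma> s2) (\<alpha> u2) \<le> \<rho>" using HX by blast
      then show ?thesis using same_side[OF mg H(1,2) g \<rho> q K C s12 H(3-6) s(1)] unfolding NP_def by (meson max.coboundedI1 max.coboundedI2)
    next
      case 2
      then obtain \<alpha> A u1 u2 where H: "morse M d N \<alpha> {0..A}" "isometric_on M d \<alpha> {0..A}"
        "u1 \<in> {0..A}" "u2 \<in> {0..A}" "d (\<gamma> s1) (\<alpha> u1) \<le> \<rho>" "d (\<gamma> s2) (\<alpha> u2) \<le> \<rho>" using HY by blast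
      then show ?thesis using same_side[OF mg H(1,2) g \<rho> q K C s12 H(3-6) s(1)] unfolding NP_def by (meson max.coboundedI1 max.coboundedI2)
    next
      case 3
      then show ?thesis using mixed_case[OF mg G g \<rho> HX HY q K C s12 3 s(1)] unfolding NP_def by (meson max.coboundedI1 max.coboundedI2)
    next
      case 4
      define rq where "rq = (\<lambda>t. q (a + b - t))"
      have rq: "quasigeodesic M d K C rq a b" unfolding rq_def by (rule quasi_reverse[OF q])
      have e: "rq a = \<gamma> s2" "rq b = \<gamma> s1" using s12 unfolding rq_def by auto
      have sr: "a + b - s \<in> {a..b}" using s by auto
      obtain t where "d (rq (a + b - s)) (\<gamma> t) \<le> RSS N (3*K) (C+1) \<rho>"
        using mixed_case[OF mg G g \<rho> HX HY rq K C e 4(2) 4(1) sr] by blast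
      then show ?thesis unfolding NP_def rq_def by (intro exI[of _ t]) (simp add: max.coboundedI2)
    qed
  qed
  then show "x \<in> nbhd M d (NP N \<rho> K C) (\<gamma> ` UNIV)" unfolding nbhd_def using xM s by auto
qed

end

definition qr :: "nat \<Rightarrow> real" where "qr i = of_rat (nat_to_rat_surj i)"

lemma qr_dense:
  assumes "x < y" shows "\<exists>i. x < qr i \<and> qr i < y"
proof -
  obtain q where q: "q \<in> \<rat>" "x < q" "q < y" using Rats_dense_in_real[OF assms] by auto
  obtain z where z: "q = of_rat z" using q(1) by (auto elim: Rats_cases)
  obtain i where "z = nat_to_rat_surj i" using surj_nat_to_rat_surj by (metis surjD)
  then show ?thesis using q z by (auto simp: qr_def)
qed

context Metric_space begin

lemma tri4: "x \<in> M \<Longrightarrow> y \<in> M \<Longrightarrow> z \<in> M \<Longrightarrow> w \<in> M \<Longrightarrow> d x w \<le> d x y + d y z + d z w"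
  using triangle[of x y w] triangle[of y z w] by fastforce

lemma AA:
  fixes h :: "nat \<Rightarrow> real \<Rightarrow> 'a" and a b :: "nat \<Rightarrow> real" and R :: real
  assumes P: "proper_mspace M d" and eM: "e \<in> M"
  and h: "\<forall>k. isometric_on M d (h k) {a k..b k} \<and> a k \<le> 0 \<and> 0 \<le> b k \<and> d e (h k 0) \<le> R"
  and ab: "\<forall>T. \<exists>k0. \<forall>k\<ge>k0. a k \<le> -T \<and> T \<le> b k"
  shows "\<exists>r \<gamma>. strict_mono (r :: nat \<Rightarrow> nat) \<and> isometric_on M d \<gamma> UNIV \<and>
     (\<forall>T \<epsilon>. 0 < \<epsilon> \<longrightarrow> (\<exists>k0. \<forall>k\<ge>k0. \<forall>t\<in>{-T..T}. a (r k) \<le> t \<and> t \<le> b (r k) \<and> d (h (r k) t) (\<gamma> t) < \<epsilon>))"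
proof -
  define H where "H k t = (if a k \<le> t \<and> t \<le> b k then h k t else e)" for k t
  have R0: "0 \<le> R" using h nonneg[of e "h 0 0"] by (meson order_trans)
  have hM: "h k t \<in> M" if "a k \<le> t" "t \<le> b k" for k t using h iso_M[of "h k" "{a k..b k}" t] that by auto
  have hd: "d (h k s) (h k t) = \<bar>s - t\<bar>" if "a k \<le> s" "s \<le> b k" "a k \<le> t" "t \<le> b k" for k s t
    using h iso_d[of "h k" "{a k..b k}" s t] that by auto
  have Hball: "H k t \<in> mcball e (R + \<bar>t\<bar>)" for k t
  proof (cases "a k \<le> t \<and> t \<le> b k")
    case True
    have h0: "h k 0 \<in> M" using hM h by auto
    have "d e (h k t) \<le> d e (h k 0) + d (h k 0) (h k t)" using triangle[OF eM h0 hM] True by auto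
    moreover have "d (h k 0) (h k t) = \<bar>t\<bar>" using hd[of k 0 t] h True by auto
    moreover have "d e (h k 0) \<le> R" using h by auto
    ultimately have "d e (h k t) \<le> R + \<bar>t\<bar>" by linarith
    then show ?thesis using True hM eM unfolding H_def by auto
  next
    case False then show ?thesis using eM R0 unfolding H_def by auto
  qed
  have HM: "H k t \<in> M" for k t using Hball[of k t] by auto
  have cpt: "compactin mtopology (mcball e rr)" for rr using P eM unfolding proper_mspace_def by auto
  have seqc: "\<exists>l r'. l \<in> mcball e rr \<and> strict_mono r' \<and> limitin mtopology (\<sigma> \<circ> r') l sequentially"
    if "range \<sigma> \<subseteq> mcball e rr" for \<sigma> :: "nat \<Rightarrow> 'a" and rr
    using cpt[of rr] that unfolding compactin_sequentially by blast
  interpret S: subseqs "\<lambda>i s. \<exists>l. limitin mtopology (\<lambda>k. H (s k) (qr i)) l sequentially"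
  proof
    fix i :: nat and s :: "nat \<Rightarrow> nat" assume "strict_mono s"
    have "range (\<lambda>k. H (s k) (qr i)) \<subseteq> mcball e (R + \<bar>qr i\<bar>)" using Hball by auto
    then obtain l r' where "strict_mono r'" "limitin mtopology ((\<lambda>k. H (s k) (qr i)) \<circ> r') l sequentially"
      using seqc by blast
    then show "\<exists>r'. strict_mono r' \<and> (\<exists>l. limitin mtopology (\<lambda>k. H ((s \<circ> r') k) (qr i)) l sequentially)"
      by (auto simp: o_def)
  qed
  define r where "r = S.diagseq"
  have rmono: "strict_mono r" using S.subseq_diagseq r_def by simp
  have convq: "\<exists>l. limitin mtopology (\<lambda>k. H (r k) (qr i)) l sequentially" for i
  proof -
    have "\<exists>l. limitin mtopology (\<lambda>k. H ((S.diagseq \<circ> (+) (Suc i)) k) (qr i)) l sequentially"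
    proof (rule S.diagseq_holds)
      fix r' s n assume "strict_mono (r'::nat\<Rightarrow>nat)" "\<exists>l. limitin mtopology (\<lambda>k. H (s k) (qr n)) l sequentially"
      then show "\<exists>l. limitin mtopology (\<lambda>k. H ((s \<circ> r') k) (qr n)) l sequentially"
        using limitin_subsequence by (fastforce simp: o_def)
    qed
    then obtain l where "limitin mtopology (\<lambda>k. H (S.diagseq (k + Suc i)) (qr i)) l sequentially"
      by (auto simp: o_def add.commute)
    then have "limitin mtopology (\<lambda>k. H (S.diagseq k) (qr i)) l sequentially"
      by (rule limitin_sequentially_offset_rev[where f = "\<lambda>k. H (S.diagseq k) (qr i)"])
    then show ?thesis using r_def by auto
  qed
  have rk: "k \<le> r k" for k using seq_suble[OF rmono] .
  have valid: "\<exists>k0. \<forall>k\<ge>k0. a (r k) \<le> -T \<and> T \<le> b (r k)" for T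
  proof -
    obtain k0 where "\<forall>k\<ge>k0. a k \<le> -T \<and> T \<le> b k" using ab by blast
    then show ?thesis using rk by (metis order_trans)
  qed
  have Hd: "d (H (r k) s) (H (r k) t) = \<bar>s - t\<bar>" if "a (r k) \<le> -T" "T \<le> b (r k)" "\<bar>s\<bar> \<le> T" "\<bar>t\<bar> \<le> T" for k s t T
    using hd[of "r k" s t] that unfolding H_def by auto
  have cauchy: "MCauchy (\<lambda>k. H (r k) t)" for t
    unfolding MCauchy_def
  proof (intro conjI allI impI)
    show "range (\<lambda>k. H (r k) t) \<subseteq> M" using HM by auto
    fix \<epsilon> :: real assume \<epsilon>: "0 < \<epsilon>"
    obtain i where i: "t - \<epsilon>/4 < qr i" "qr i < t + \<epsilon>/4" using qr_dense[of "t - \<epsilon>/4" "t + \<epsilon>/4"] \<epsilon> by auto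
    obtain l where l: "limitin mtopology (\<lambda>k. H (r k) (qr i)) l sequentially" using convq by blast
    have "MCauchy (\<lambda>k. H (r k) (qr i))" by (rule convergent_imp_MCauchy) (use HM l in auto)
    then obtain N1 where N1: "\<And>n n'. N1 \<le> n \<Longrightarrow> N1 \<le> n' \<Longrightarrow> d (H (r n) (qr i)) (H (r n') (qr i)) < \<epsilon>/4"
      unfolding MCauchy_def using \<epsilon> by (meson zero_less_divide_iff zero_less_numeral)
    obtain N2 where N2: "\<forall>k\<ge>N2. a (r k) \<le> -(\<bar>t\<bar> + \<bar>qr i\<bar>) \<and> \<bar>t\<bar> + \<bar>qr i\<bar> \<le> b (r k)" using valid by blast
    show "\<exists>N. \<forall>n n'. N \<le> n \<longrightarrow> N \<le> n' \<longrightarrow> d (H (r n) t) (H (r n') t) < \<epsilon>"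
    proof (intro exI[of _ "max N1 N2"] allI impI)
      fix n n' assume n: "max N1 N2 \<le> n" "max N1 N2 \<le> n'"
      have d1: "d (H (r n) t) (H (r n) (qr i)) = \<bar>t - qr i\<bar>" using Hd[of n "\<bar>t\<bar> + \<bar>qr i\<bar>" t "qr i"] N2 n by auto
      have d2: "d (H (r n') (qr i)) (H (r n') t) = \<bar>qr i - t\<bar>" using Hd[of n' "\<bar>t\<bar> + \<bar>qr i\<bar>" "qr i" t] N2 n by auto
      have d3: "d (H (r n) (qr i)) (H (r n') (qr i)) < \<epsilon>/4" using N1 n by auto
      have "d (H (r n) t) (H (r n') t) \<le> d (H (r n) t) (H (r n) (qr i)) + d (H (r n) (qr i)) (H (r n') (qr i)) + d (H (r n') (qr i)) (H (r n') t)"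
        by (rule tri4) (rule HM)+
      then show "d (H (r n) t) (H (r n') t) < \<epsilon>" using d1 d2 d3 i by (simp add: abs_minus_commute) argo
    qed
  qed
  have conv: "\<exists>l. limitin mtopology (\<lambda>k. H (r k) t) l sequentially" for t
  proof -
    have "range (\<lambda>k. H (r k) t) \<subseteq> mcball e (R + \<bar>t\<bar>)" using Hball by auto
    then obtain l r' where "strict_mono r'" "limitin mtopology ((\<lambda>k. H (r k) t) \<circ> r') l sequentially"
      using seqc by blast
    then show ?thesis using MCauchy_convergent_subsequence[OF cauchy] by blast
  qed
  define \<gamma> where "\<gamma> t = (SOME l. limitin mtopology (\<lambda>k. H (r k) t) l sequentially)" for t
  have glim: "limitin mtopology (\<lambda>k. H (r k) t) (\<gamma> t) sequentially" for t
    unfolding \<gamma>_def by (rule someI_ex) (rule conv)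
  have gM: "\<gamma> t \<in> M" for t using glim limitin_mspace by blast
  have gconv: "\<exists>N. \<forall>k\<ge>N. d (H (r k) t) (\<gamma> t) < \<epsilon>" if "0 < \<epsilon>" for t \<epsilon>
    using glim[of t] that unfolding limit_metric_sequentially by blast
  have giso: "isometric_on M d \<gamma> UNIV"
    unfolding isometric_on_def
  proof (intro conjI ballI)
    show "\<gamma> ` UNIV \<subseteq> M" using gM by auto
    fix s t :: real
    have "\<bar>d (\<gamma> s) (\<gamma> t) - \<bar>s - t\<bar>\<bar> \<le> 2*\<epsilon>" if \<epsilon>: "0 < \<epsilon>" for \<epsilon>
    proof -
      obtain N1 where N1: "\<forall>k\<ge>N1. d (H (r k) s) (\<gamma> s) < \<epsilon>" using gconv \<epsilon> by blast
      obtain N2 where N2: "\<forall>k\<ge>N2. d (H (r k) t) (\<gamma> t) < \<epsilon>" using gconv \<epsilon> by blast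
      obtain N3 where N3: "\<forall>k\<ge>N3. a (r k) \<le> -(\<bar>s\<bar> + \<bar>t\<bar>) \<and> \<bar>s\<bar> + \<bar>t\<bar> \<le> b (r k)" using valid by blast
      define k where "k = max N1 (max N2 N3)"
      have a1: "d (H (r k) s) (\<gamma> s) < \<epsilon>" "d (H (r k) t) (\<gamma> t) < \<epsilon>" using N1 N2 k_def by auto
      have a2: "d (H (r k) s) (H (r k) t) = \<bar>s - t\<bar>" using Hd[of k "\<bar>s\<bar> + \<bar>t\<bar>" s t] N3 k_def by auto
      have t1: "d (\<gamma> s) (\<gamma> t) \<le> d (\<gamma> s) (H (r k) s) + d (H (r k) s) (H (r k) t) + d (H (r k) t) (\<gamma> t)"
        by (rule tri4) (rule HM gM)+
      have t2: "d (H (r k) s) (H (r k) t) \<le> d (H (r k) s) (\<gamma> s) + d (\<gamma> s) (\<gamma> t) + d (\<gamma> t) (H (r k) t)"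
        by (rule tri4) (rule HM gM)+
      show ?thesis using t1 t2 a1 a2 commute[of "\<gamma> s" "H (r k) s"] commute[of "\<gamma> t" "H (r k) t"] by argo
    qed
    then have "\<bar>d (\<gamma> s) (\<gamma> t) - \<bar>s - t\<bar>\<bar> \<le> 0 + \<epsilon>" if "0 < \<epsilon>" for \<epsilon>
      using that by (metis add_0 field_sum_of_halves half_gt_zero mult_2)
    then have "\<bar>d (\<gamma> s) (\<gamma> t) - \<bar>s - t\<bar>\<bar> \<le> 0" by (rule field_le_epsilon)
    then show "d (\<gamma> s) (\<gamma> t) = \<bar>s - t\<bar>" by simp
  qed
  have unif: "\<exists>k0. \<forall>k\<ge>k0. \<forall>t\<in>{-T..T}. a (r k) \<le> t \<and> t \<le> b (r k) \<and> d (h (r k) t) (\<gamma> t) < \<epsilon>"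
    if \<epsilon>: "0 < \<epsilon>" for T \<epsilon>
  proof -
    define T' where "T' = max T 0"
    define \<delta> where "\<delta> = \<epsilon>/4"
    have \<delta>: "0 < \<delta>" using \<epsilon> \<delta>_def by auto
    define J where "J = nat \<lceil>2*T'/\<delta>\<rceil>"
    define grid where "grid j = -T' + real j * \<delta>" for j :: nat
    have ev: "\<forall>\<^sub>F k in sequentially. \<forall>j\<in>{..J}. d (H (r k) (grid j)) (\<gamma> (grid j)) < \<delta>"
    proof (rule eventually_ball_finite)
      show "finite {..J}" by simp
      show "\<forall>j\<in>{..J}. \<forall>\<^sub>F k in sequentially. d (H (r k) (grid j)) (\<gamma> (grid j)) < \<delta>"
        using gconv \<delta> by (auto simp: eventually_sequentially)
    qed
    obtain k1 where k1: "\<forall>k\<ge>k1. \<forall>j\<in>{..J}. d (H (r k) (grid j)) (\<gamma> (grid j)) < \<delta>"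
      using ev unfolding eventually_sequentially by blast
    obtain k2 where k2: "\<forall>k\<ge>k2. a (r k) \<le> -(T' + \<delta>) \<and> T' + \<delta> \<le> b (r k)" using valid by blast
    show ?thesis
    proof (intro exI[of _ "max k1 k2"] allI impI ballI conjI)
      fix k t assume k: "max k1 k2 \<le> k" and t: "t \<in> {-T..T}"
      have tT: "-T' \<le> t" "t \<le> T'" using t T'_def by auto
      have va: "a (r k) \<le> -(T' + \<delta>)" "T' + \<delta> \<le> b (r k)" using k2 k by auto
      then show "a (r k) \<le> t" "t \<le> b (r k)" using tT \<delta> by auto
      define j where "j = nat \<lfloor>(t + T')/\<delta>\<rfloor>"
      have fl0: "0 \<le> \<lfloor>(t + T')/\<delta>\<rfloor>" using tT \<delta> by auto
      have jr: "real j = of_int \<lfloor>(t + T')/\<delta>\<rfloor>" using fl0 j_def by simp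
      have j1: "real j \<le> (t + T')/\<delta>" "(t + T')/\<delta> < real j + 1" using jr by linarith+
      have j2: "real j * \<delta> \<le> t + T'" "t + T' < real j * \<delta> + \<delta>"
        using j1 \<delta> by (auto simp: field_simps)
      have jJ: "j \<in> {..J}"
      proof -
        have "(t + T')/\<delta> \<le> 2*T'/\<delta>" using tT \<delta> by (auto simp: divide_right_mono)
        then have "\<lfloor>(t + T')/\<delta>\<rfloor> \<le> \<lceil>2*T'/\<delta>\<rceil>" by (meson floor_le_ceiling floor_mono order_trans)
        then show ?thesis unfolding j_def J_def by (simp add: nat_mono)
      qed
      have gj: "\<bar>grid j - t\<bar> \<le> \<delta>" "\<bar>grid j\<bar> \<le> T' + \<delta>" using j2 tT \<delta> unfolding grid_def by auto
      have tt: "\<bar>t\<bar> \<le> T' + \<delta>" using tT \<delta> by auto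
      have e1: "d (H (r k) t) (H (r k) (grid j)) = \<bar>t - grid j\<bar>" using Hd[OF va(1) va(2) tt gj(2)] .
      have e2: "d (H (r k) (grid j)) (\<gamma> (grid j)) < \<delta>" using k1 k jJ by auto
      have e3: "d (\<gamma> (grid j)) (\<gamma> t) = \<bar>grid j - t\<bar>" using iso_d[OF giso] by auto
      have "d (H (r k) t) (\<gamma> t) \<le> d (H (r k) t) (H (r k) (grid j)) + d (H (r k) (grid j)) (\<gamma> (grid j)) + d (\<gamma> (grid j)) (\<gamma> t)"
        by (rule tri4) (rule HM gM)+
      then have "d (H (r k) t) (\<gamma> t) < \<epsilon>" using e1 e2 e3 gj \<delta>_def by (simp add: abs_minus_commute) argo
      moreover have "H (r k) t = h (r k) t" using va tT \<delta> unfolding H_def by auto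
      ultimately show "d (h (r k) t) (\<gamma> t) < \<epsilon>" by simp
    qed
  qed
  have "\<forall>T \<epsilon>. 0 < \<epsilon> \<longrightarrow> (\<exists>k0. \<forall>k\<ge>k0. \<forall>t\<in>{-T..T}. a (r k) \<le> t \<and> t \<le> b (r k) \<and> d (h (r k) t) (\<gamma> t) < \<epsilon>)"
    using unif by blast
  then show ?thesis using rmono giso by (intro exI[of _ r] exI[of _ \<gamma>] conjI) auto
qed

end

lemma RSS_nonneg:
  assumes "morse_gauge N" "1 \<le> K" "0 \<le> C" "0 \<le> \<rho>"
  shows "0 \<le> RSS N K C \<rho>"
proof -
  have a: "0 \<le> N K (C + 2*\<rho>)" "0 \<le> N 1 (2*\<rho>)" using assms unfolding morse_gauge_def by auto
  have b: "0 \<le> K*K*(3*(C + 2*(N K (C + 2*\<rho>) + \<rho>))+2)" using a assms by auto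
  show ?thesis using a b assms unfolding RSS_def Rcov_def by argo
qed

lemma NP_gauge: "morse_gauge N \<Longrightarrow> 0 \<le> \<rho> \<Longrightarrow> morse_gauge (NP N \<rho>)"
  unfolding morse_gauge_def NP_def
  by (metis (no_types, lifting) RSS_nonneg max.coboundedI1 morse_gauge_def)

context Metric_space begin

lemma ft:
  assumes m: "morse M d N \<alpha> {0..A}" and ai: "isometric_on M d \<alpha> {0..A}" and a0: "\<alpha> 0 = e"
    and bi: "isometric_on M d \<beta> {0..B}" and b0: "\<beta> 0 = e"
    and T: "T \<in> {0..B}" and u: "u \<in> {0..A}" "d (\<beta> T) (\<alpha> u) \<le> \<rho>"
    and t: "t \<in> {0..T}"
  shows "\<exists>v\<in>{0..A}. d (\<beta> t) (\<alpha> v) \<le> N 1 (2*\<rho>) + \<rho> \<and> \<bar>t - v\<bar> \<le> N 1 (2*\<rho>) + \<rho>"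
proof -
  have \<rho>: "0 \<le> \<rho>" using u(2) nonneg[of "\<beta> T" "\<alpha> u"] by linarith
  have A0: "0 \<in> {0..A}" using u by auto
  have q: "quasigeodesic M d 1 0 \<beta> 0 T" using iso_quasi[OF iso_sub[OF bi] ] T by auto
  have aM: "\<alpha> ` {0..A} \<subseteq> M" using ai unfolding isometric_on_def by auto
  have eM: "e \<in> M" using a0 aM A0 by auto
  have q0: "d (\<beta> 0) (\<alpha> 0) \<le> \<rho>" using a0 b0 eM \<rho> by simp
  obtain v where v: "v \<in> {0..A}" "d (\<beta> t) (\<alpha> v) \<le> N 1 (0 + 2*\<rho>) + \<rho>"
    using morse_perturb[OF m _ _ q A0 u(1) q0 u(2) aM t] by auto
  have tB: "t \<in> {0..B}" using t T by auto
  have bt: "\<beta> t \<in> M" "d e (\<beta> t) = t" using iso_M[OF bi tB] iso_d[OF bi, of 0 t] tB b0 by auto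
  have av: "\<alpha> v \<in> M" "d e (\<alpha> v) = v" using iso_M[OF ai v(1)] iso_d[OF ai, of 0 v] v(1) A0 a0 by auto
  have "d e (\<beta> t) \<le> d e (\<alpha> v) + d (\<alpha> v) (\<beta> t)" "d e (\<alpha> v) \<le> d e (\<beta> t) + d (\<beta> t) (\<alpha> v)"
    using triangle[OF eM av(1) bt(1)] triangle[OF eM bt(1) av(1)] .
  then show ?thesis using v bt av commute[of "\<alpha> v" "\<beta> t"] by (intro bexI[of _ v]) auto
qed

lemma gp_lower:
  assumes z: "isometric_on M d \<zeta> {0..L}" "\<zeta> 0 = x" "\<zeta> L = y" "L = d x y" and eM: "e \<in> M"
    and t: "t \<in> {0..L}"
  shows "gprod d e x y \<le> d e (\<zeta> t)"
proof -
  have L0: "0 \<in> {0..L}" "L \<in> {0..L}" using t by auto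
  have m0: "\<zeta> 0 \<in> M" "\<zeta> L \<in> M" "\<zeta> t \<in> M" using iso_M[OF z(1)] L0 t by auto
  have m: "x \<in> M" "y \<in> M" "\<zeta> t \<in> M" using m0 z(2,3) by auto
  have d0: "d (\<zeta> t) (\<zeta> 0) = t" "d (\<zeta> t) (\<zeta> L) = L - t" using iso_d[OF z(1)] t L0 by auto
  have d1: "d (\<zeta> t) x = t" "d (\<zeta> t) y = L - t" using d0 z(2,3) by auto
  have "d e x \<le> d e (\<zeta> t) + d (\<zeta> t) x" "d e y \<le> d e (\<zeta> t) + d (\<zeta> t) y"
    using triangle[OF eM m(3) m(1)] triangle[OF eM m(3) m(2)] .
  then show ?thesis unfolding gprod_def using d1 z(4) by argo
qed

lemma gp_upper:
  assumes a: "isometric_on M d \<alpha> {0..A}" "\<alpha> 0 = e" "\<alpha> A = x"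
    and b: "isometric_on M d \<beta> {0..B}" "\<beta> 0 = e" "\<beta> B = y"
    and v: "v \<in> {0..A}" and w: "w \<in> {0..B}"
  shows "(v + w - d (\<alpha> v) (\<beta> w))/2 \<le> gprod d e x y"
proof -
  have A0: "0 \<in> {0..A}" "A \<in> {0..A}" "0 \<in> {0..B}" "B \<in> {0..B}" using v w by auto
  have m: "x \<in> M" "y \<in> M" "\<alpha> v \<in> M" "\<beta> w \<in> M" using iso_M[OF a(1)] iso_M[OF b(1)] A0 v w a b by auto
  have d0: "d (\<alpha> 0) (\<alpha> A) = A" "d (\<beta> 0) (\<beta> B) = B" "d (\<alpha> A) (\<alpha> v) = A - v" "d (\<beta> w) (\<beta> B) = B - w"
    using iso_d[OF a(1), of 0 A] iso_d[OF b(1), of 0 B] iso_d[OF a(1), of A v] iso_d[OF b(1), of w B] A0 v w by auto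
  have d1: "d e x = A" "d e y = B" "d x (\<alpha> v) = A - v" "d (\<beta> w) y = B - w"
    using d0 a(2,3) b(2,3) by auto
  have "d x y \<le> d x (\<alpha> v) + d (\<alpha> v) (\<beta> w) + d (\<beta> w) y"
    using triangle[OF m(1) m(3) m(2)] triangle[OF m(3) m(4) m(2)] by linarith
  then show ?thesis unfolding gprod_def using d1 by argo
qed

lemma tri_morse:
  assumes G: "geodesic_mspace M d"
    and m1: "morse M d N \<alpha>1 {0..A1}" "isometric_on M d \<alpha>1 {0..A1}" "\<alpha>1 0 = e" "\<alpha>1 A1 = x" "0 \<le> A1"
    and m2: "morse M d N \<alpha>2 {0..A2}" "isometric_on M d \<alpha>2 {0..A2}" "\<alpha>2 0 = e" "\<alpha>2 A2 = y" "0 \<le> A2"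
  shows "\<exists>p v1 v2. v1 \<in> {0..A1} \<and> v2 \<in> {0..A2} \<and> d p (\<alpha>1 v1) \<le> N 3 0 \<and> d p (\<alpha>2 v2) \<le> N 3 0
     \<and> gprod d e x y \<le> d e p \<and> p \<in> M"
proof -
  have aM1: "\<alpha>1 ` {0..A1} \<subseteq> M" using m1 unfolding isometric_on_def by auto
  have aM2: "\<alpha>2 ` {0..A2} \<subseteq> M" using m2 unfolding isometric_on_def by auto
  have xI: "x \<in> \<alpha>1 ` {0..A1}" "e \<in> \<alpha>1 ` {0..A1}" using m1 by (auto intro!: image_eqI)
  have yI: "y \<in> \<alpha>2 ` {0..A2}" "e \<in> \<alpha>2 ` {0..A2}" using m2 by (auto intro!: image_eqI)
  have xyM: "x \<in> M" "y \<in> M" "e \<in> M" using xI yI aM1 aM2 by auto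
  obtain \<zeta> where z: "isometric_on M d \<zeta> {0..d x y}" "\<zeta> 0 = x" "\<zeta> (d x y) = y"
    using geo_exists[OF G xyM(1,2)] .
  define Lz where "Lz = d x y"
  have Lz: "0 \<le> Lz" using Lz_def by simp
  obtain \<sigma> where \<sigma>: "\<sigma> \<in> {0..Lz}" "\<forall>t\<in>{0..Lz}. d e (\<zeta> \<sigma>) \<le> d e (\<zeta> t)"
    using closest_point[OF z(1)[folded Lz_def] Lz xyM(3)] by blast
  have zs: "isometric_on M d \<zeta> {0..\<sigma>}" using iso_sub[OF z(1)] \<sigma> Lz_def by auto
  obtain v1 where v1: "v1 \<in> {0..A1}" "d (\<zeta> \<sigma>) (\<alpha>1 v1) \<le> N 3 0"
  proof -
    have "\<exists>u\<in>{0..A1}. d (\<zeta> \<sigma>) (\<alpha>1 u) \<le> N 3 0"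
      by (rule proj3_morse[OF G m1(1) aM1 xI zs]) (use \<sigma> z xyM in auto)
    then show ?thesis using that by blast
  qed
  define \<zeta>' where "\<zeta>' t = \<zeta> (Lz - t)" for t
  have z': "isometric_on M d \<zeta>' {0..Lz}" using iso_reverse[OF z(1)[folded Lz_def]] unfolding \<zeta>'_def by simp
  have zs': "isometric_on M d \<zeta>' {0..Lz - \<sigma>}" using iso_sub[OF z'] \<sigma> by auto
  have z'0: "\<zeta>' 0 = y" "\<zeta>' (Lz - \<sigma>) = \<zeta> \<sigma>" using z Lz_def \<zeta>'_def by auto
  obtain v2 where v2: "v2 \<in> {0..A2}" "d (\<zeta> \<sigma>) (\<alpha>2 v2) \<le> N 3 0"
  proof -
    have "\<exists>u\<in>{0..A2}. d (\<zeta>' (Lz - \<sigma>)) (\<alpha>2 u) \<le> N 3 0"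
    proof (rule proj3_morse[OF G m2(1) aM2 yI zs'])
      show "\<forall>t\<in>{0..Lz - \<sigma>}. d y (\<zeta>' 0) \<le> d y (\<zeta>' t)" using z'0 xyM by simp
      show "\<forall>t\<in>{0..Lz - \<sigma>}. d e (\<zeta>' (Lz - \<sigma>)) \<le> d e (\<zeta>' t)" using \<sigma> unfolding \<zeta>'_def by auto
    qed (use \<sigma> z'0 xyM in auto)
    then show ?thesis using that z'0 by auto
  qed
  have "gprod d e x y \<le> d e (\<zeta> \<sigma>)" by (rule gp_lower[OF z(1)[folded Lz_def] z(2) z(3)[folded Lz_def] Lz_def xyM(3) \<sigma>(1)])
  moreover have "\<zeta> \<sigma> \<in> M" using iso_M[OF z(1)] \<sigma> Lz_def by auto
  ultimately show ?thesis using v1 v2 by blast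
qed

lemma core:
  assumes G: "geodesic_mspace M d"
    and m: "morse M d N \<alpha> {0..A}" "isometric_on M d \<alpha> {0..A}" "\<alpha> 0 = e"
    and nA: "0 \<le> n" "n \<le> A" and c: "d (\<alpha> n) (\<zeta> 0) < 1"
    and z: "isometric_on M d \<zeta> {0..\<sigma>}" and cl: "\<forall>t\<in>{0..\<sigma>}. d e (\<zeta> \<sigma>) \<le> d e (\<zeta> t)"
    and R: "d e (\<zeta> \<sigma>) \<le> R0" and \<sigma>n: "n - R0 \<le> \<sigma>" and nbig: "3*R0 + 4 \<le> n"
    and t: "t \<in> {2..\<sigma>}"
  shows "\<exists>u\<in>{0..A}. d (\<zeta> t) (\<alpha> u) \<le> N 3 0"
proof -
  have aM: "\<alpha> ` {0..A} \<subseteq> M" using m unfolding isometric_on_def by auto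
  have I: "\<alpha> n \<in> \<alpha> ` {0..A}" "e \<in> \<alpha> ` {0..A}" using m nA by (auto intro!: image_eqI)
  have cM: "\<alpha> n \<in> M" using I aM by auto
  have s0: "0 \<le> \<sigma>" using t by auto
  obtain \<sigma>1 where s1: "\<sigma>1 \<in> {0..\<sigma>}" "\<forall>t\<in>{0..\<sigma>}. d (\<alpha> n) (\<zeta> \<sigma>1) \<le> d (\<alpha> n) (\<zeta> t)"
    using closest_point[OF z s0 cM] by blast
  have A1: "d (\<alpha> n) (\<zeta> \<sigma>1) < 1" using s1 c s0 by force
  have zM: "\<zeta> 0 \<in> M" "\<zeta> \<sigma>1 \<in> M" using iso_M[OF z] s1 s0 by auto
  have "d (\<zeta> 0) (\<zeta> \<sigma>1) \<le> d (\<zeta> 0) (\<alpha> n) + d (\<alpha> n) (\<zeta> \<sigma>1)" using triangle[OF zM(1) cM zM(2)] .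
  moreover have "d (\<zeta> 0) (\<zeta> \<sigma>1) = \<sigma>1" using iso_d[OF z, of 0 \<sigma>1] s1 s0 by auto
  ultimately have s1b: "\<sigma>1 < 2" using A1 c commute[of "\<zeta> 0" "\<alpha> n"] by linarith
  have zs: "isometric_on M d \<zeta> {\<sigma>1..\<sigma>}" using iso_sub[OF z] s1 by auto
  have R0: "0 \<le> R0" using R nonneg[of e "\<zeta> \<sigma>"] by linarith
  have cond: "2 * d (\<alpha> n) (\<zeta> \<sigma>1) \<le> 0 \<or> 2 * (d (\<alpha> n) (\<zeta> \<sigma>1) + d e (\<zeta> \<sigma>)) \<le> \<sigma> - \<sigma>1"
    using A1 R \<sigma>n nbig s1b by auto
  show ?thesis
    by (rule proj3_morse[OF G m(1) aM I zs]) (use s1 cl cond t s1b in auto)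
qed

end

context Metric_space begin

lemma core2:
  assumes G: "geodesic_mspace M d"
    and m: "morse M d N \<alpha> {0..A}" "isometric_on M d \<alpha> {0..A}" "\<alpha> 0 = e"
    and nA: "0 \<le> n" "n \<le> A" and c: "d (\<alpha> n) (\<zeta> 0) < 1"
    and z: "isometric_on M d \<zeta> {0..\<sigma>}" and s0: "0 \<le> \<sigma>" and cl: "\<forall>t\<in>{0..\<sigma>}. d e (\<zeta> \<sigma>) \<le> d e (\<zeta> t)"
  shows "\<exists>u\<in>{0..A}. d (\<zeta> \<sigma>) (\<alpha> u) \<le> N 3 2"
proof -
  have aM: "\<alpha> ` {0..A} \<subseteq> M" using m unfolding isometric_on_def by auto
  have I: "\<alpha> n \<in> \<alpha> ` {0..A}" "e \<in> \<alpha> ` {0..A}" using m nA by (auto intro!: image_eqI)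
  have cM: "\<alpha> n \<in> M" using I aM by auto
  obtain \<sigma>1 where s1: "\<sigma>1 \<in> {0..\<sigma>}" "\<forall>t\<in>{0..\<sigma>}. d (\<alpha> n) (\<zeta> \<sigma>1) \<le> d (\<alpha> n) (\<zeta> t)"
    using closest_point[OF z s0 cM] by blast
  have A1: "d (\<alpha> n) (\<zeta> \<sigma>1) < 1" using s1 c s0 by force
  have zs: "isometric_on M d \<zeta> {\<sigma>1..\<sigma>}" using iso_sub[OF z] s1 by auto
  have cond: "2 * d (\<alpha> n) (\<zeta> \<sigma>1) \<le> 2 \<or> 2 * (d (\<alpha> n) (\<zeta> \<sigma>1) + d e (\<zeta> \<sigma>)) \<le> \<sigma> - \<sigma>1"
    using A1 by auto
  show ?thesis
    by (rule proj3_morse[OF G m(1) aM I zs]) (use s1 cl cond in auto)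
qed

end

locale setting = Metric_space M d for M :: "'a set" and d +
  fixes N :: "real \<Rightarrow> real \<Rightarrow> real" and e :: 'a and xs ys :: "nat \<Rightarrow> 'a" and gxn gyn :: "nat \<Rightarrow> real \<Rightarrow> 'a"
    and gx gy :: "real \<Rightarrow> 'a" and gn :: "nat \<Rightarrow> real \<Rightarrow> 'a"
  assumes mg: "morse_gauge N" and pr: "proper_mspace M d" and G: "geodesic_mspace M d" and eM: "e \<in> M"
    and cx: "converges_at_infinity d e xs" and cy: "converges_at_infinity d e ys"
    and ne: "\<not> gromov_equiv d e xs ys"
    and hxn: "\<forall>n. isometric_on M d (gxn n) {0..d e (xs n)} \<and> gxn n 0 = e \<and>
            gxn n (d e (xs n)) = xs n \<and> morse M d N (gxn n) {0..d e (xs n)}"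
    and hyn: "\<forall>n. isometric_on M d (gyn n) {0..d e (ys n)} \<and> gyn n 0 = e \<and>
            gyn n (d e (ys n)) = ys n \<and> morse M d N (gyn n) {0..d e (ys n)}"
    and gxi: "isometric_on M d gx {0..}" and gx0: "gx 0 = e"
    and gyi: "isometric_on M d gy {0..}" and gy0: "gy 0 = e"
    and lx: "subseq_limit_ray d (\<lambda>n. d e (xs n)) gxn gx"
    and ly: "subseq_limit_ray d (\<lambda>n. d e (ys n)) gyn gy"
    and hgn: "\<forall>n::nat. isometric_on M d (gn n) {0..d (gx (real n)) (gy (real n))} \<and>
            gn n 0 = gx (real n) \<and> gn n (d (gx (real n)) (gy (real n))) = gy (real n)"
begin

lemma approx_gen:
  assumes l: "subseq_limit_ray d (\<lambda>n. d e (zs n)) gzn gz" and \<epsilon>: "0 < \<epsilon>"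
  shows "\<exists>i\<ge>n0. T \<le> d e (zs i) \<and> (\<forall>t\<in>{0..T}. d (gzn i t) (gz t) < \<epsilon>)"
proof -
  obtain \<phi> where \<phi>: "strict_mono \<phi>" "\<forall>T \<epsilon>. 0 < \<epsilon> \<longrightarrow> (\<exists>k0::nat. \<forall>k\<ge>k0. T \<le> d e (zs (\<phi> k)) \<and>
        (\<forall>t\<in>{0..T}. d (gzn (\<phi> k) t) (gz t) < \<epsilon>))" using l unfolding subseq_limit_ray_def by blast
  obtain k0 where k0: "\<forall>k\<ge>k0. T \<le> d e (zs (\<phi> k)) \<and> (\<forall>t\<in>{0..T}. d (gzn (\<phi> k) t) (gz t) < \<epsilon>)"
    using \<phi>(2) \<epsilon> by blast
  define k where "k = max k0 n0"
  have "n0 \<le> \<phi> k" using seq_suble[OF \<phi>(1), of k] k_def by auto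
  then show ?thesis using k0 k_def by (intro exI[of _ "\<phi> k"]) auto
qed

lemma approx_x: "0 < \<epsilon> \<Longrightarrow> \<exists>i\<ge>n0. T \<le> d e (xs i) \<and> (\<forall>t\<in>{0..T}. d (gxn i t) (gx t) < \<epsilon>)"
  using approx_gen[OF lx] by blast
lemma approx_y: "0 < \<epsilon> \<Longrightarrow> \<exists>i\<ge>n0. T \<le> d e (ys i) \<and> (\<forall>t\<in>{0..T}. d (gyn i t) (gy t) < \<epsilon>)"
  using approx_gen[OF ly] by blast

lemma gxM: "0 \<le> t \<Longrightarrow> gx t \<in> M \<and> d e (gx t) = t"
  using iso_M[OF gxi, of t] iso_d[OF gxi, of 0 t] gx0 by auto
lemma gyM: "0 \<le> t \<Longrightarrow> gy t \<in> M \<and> d e (gy t) = t"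
  using iso_M[OF gyi, of t] iso_d[OF gyi, of 0 t] gy0 by auto

lemma xnM: "isometric_on M d (gxn i) {0..d e (xs i)}" "gxn i 0 = e" "gxn i (d e (xs i)) = xs i"
  "morse M d N (gxn i) {0..d e (xs i)}" "0 \<le> d e (xs i)"
  using hxn by auto
lemma ynM: "isometric_on M d (gyn i) {0..d e (ys i)}" "gyn i 0 = e" "gyn i (d e (ys i)) = ys i"
  "morse M d N (gyn i) {0..d e (ys i)}" "0 \<le> d e (ys i)"
  using hyn by auto

lemma alpha_time: "isometric_on M d \<alpha> {0..A} \<Longrightarrow> \<alpha> 0 = e \<Longrightarrow> u \<in> {0..A} \<Longrightarrow> \<alpha> u \<in> M \<and> d e (\<alpha> u) = u"
  using iso_M[of \<alpha> "{0..A}" u] iso_d[of \<alpha> "{0..A}" 0 u] by auto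


lemma R0_exists: "\<exists>R0. \<forall>n0. \<exists>n\<ge>n0. \<exists>t\<in>{0..d (gx (real n)) (gy (real n))}. d e (gn n t) \<le> R0"
proof (rule ccontr)
  assume "\<not> ?thesis"
  then have H: "\<forall>R. \<exists>n0. \<forall>n\<ge>n0. \<forall>t\<in>{0..d (gx (real n)) (gy (real n))}. R < d e (gn n t)"
    by (meson not_le)
  have "gromov_equiv d e xs ys" unfolding gromov_equiv_def
  proof
    fix B :: real
    define r where "r = N 3 0"
    define m1 where "m1 = N 3 2"
    define m2 where "m2 = N 1 (2*(2*m1)) + 2*m1"
    define m3 where "m3 = N 1 (2*(2*r)) + 2*r"
    have nn: "0 \<le> r" "0 \<le> m1" "0 \<le> m2" "0 \<le> m3" using mg unfolding morse_gauge_def r_def m1_def m2_def m3_def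
      by (auto intro!: add_nonneg_nonneg)
    define B' where "B' = \<bar>B\<bar> + 2*m2 + 2*m3 + r + 2"
    define T' where "T' = \<bar>B\<bar> + m2 + 2*m3 + m1 + 2"
    obtain n0x where n0x: "\<forall>i\<ge>n0x. \<forall>j\<ge>n0x. B' \<le> gprod d e (xs i) (xs j)" using cx unfolding converges_at_infinity_def by blast
    obtain n0y where n0y: "\<forall>i\<ge>n0y. \<forall>j\<ge>n0y. B' \<le> gprod d e (ys i) (ys j)" using cy unfolding converges_at_infinity_def by blast
    obtain n where nH: "\<forall>t\<in>{0..d (gx (real n)) (gy (real n))}. T' < d e (gn n t)" using H by blast
    define Lz where "Lz = d (gx (real n)) (gy (real n))"
    have z: "isometric_on M d (gn n) {0..Lz}" "gn n 0 = gx (real n)" "gn n Lz = gy (real n)" using hgn Lz_def by auto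
    have Lz0: "0 \<le> Lz" using Lz_def by simp
    obtain \<sigma> where \<sigma>: "\<sigma> \<in> {0..Lz}" "\<forall>t\<in>{0..Lz}. d e (gn n \<sigma>) \<le> d e (gn n t)"
      using closest_point[OF z(1) Lz0 eM] by blast
    have dp: "T' < d e (gn n \<sigma>)" using nH \<sigma> Lz_def by auto
    obtain i0 where i0: "i0 \<ge> n0x" "real n \<le> d e (xs i0)" "\<forall>t\<in>{0..real n}. d (gxn i0 t) (gx t) < 1"
      using approx_x[of 1 n0x "real n"] by auto
    obtain j0 where j0: "j0 \<ge> n0y" "real n \<le> d e (ys j0)" "\<forall>t\<in>{0..real n}. d (gyn j0 t) (gy t) < 1"
      using approx_y[of 1 n0y "real n"] by auto
    define \<alpha> where "\<alpha> = gxn i0"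
    define A where "A = d e (xs i0)"
    define \<beta> where "\<beta> = gyn j0"
    define Bb where "Bb = d e (ys j0)"
    have \<alpha>: "isometric_on M d \<alpha> {0..A}" "\<alpha> 0 = e" "morse M d N \<alpha> {0..A}" "\<alpha> A = xs i0" "0 \<le> A"
      using xnM[of i0] unfolding \<alpha>_def A_def by auto
    have \<beta>: "isometric_on M d \<beta> {0..Bb}" "\<beta> 0 = e" "morse M d N \<beta> {0..Bb}" "\<beta> Bb = ys j0" "0 \<le> Bb"
      using ynM[of j0] unfolding \<beta>_def Bb_def by auto
    have c1: "d (\<alpha> (real n)) (gn n 0) < 1" using i0(3) z(2) unfolding \<alpha>_def by auto
    obtain u1 where u1: "u1 \<in> {0..A}" "d (gn n \<sigma>) (\<alpha> u1) \<le> m1"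
      using core2[OF G \<alpha>(3,1,2) _ _ c1 iso_sub[OF z(1)], of \<sigma>] \<sigma> i0(2) A_def m1_def by auto
    define \<zeta>' where "\<zeta>' t = gn n (Lz - t)" for t
    have z': "isometric_on M d \<zeta>' {0..Lz}" using iso_reverse[OF z(1)] unfolding \<zeta>'_def by simp
    have z'0: "\<zeta>' 0 = gy (real n)" "\<zeta>' (Lz - \<sigma>) = gn n \<sigma>" using z \<zeta>'_def by auto
    have c2: "d (\<beta> (real n)) (\<zeta>' 0) < 1" using j0(3) z'0 unfolding \<beta>_def by auto
    have cl': "\<forall>t\<in>{0..Lz - \<sigma>}. d e (\<zeta>' (Lz - \<sigma>)) \<le> d e (\<zeta>' t)"
      using \<sigma> unfolding \<zeta>'_def by auto
    obtain u2 where u2: "u2 \<in> {0..Bb}" "d (gn n \<sigma>) (\<beta> u2) \<le> m1"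
      using core2[OF G \<beta>(3,1,2) _ _ c2 iso_sub[OF z'], of "Lz - \<sigma>"] \<sigma> j0(2) Bb_def m1_def cl' z'0 by auto
    have pM: "gn n \<sigma> \<in> M" using iso_M[OF z(1) \<sigma>(1)] .
    have au1: "\<alpha> u1 \<in> M" "d e (\<alpha> u1) = u1" using alpha_time[OF \<alpha>(1,2) u1(1)] by auto
    have bu2: "\<beta> u2 \<in> M" "d e (\<beta> u2) = u2" using alpha_time[OF \<beta>(1,2) u2(1)] by auto
    have "d e (gn n \<sigma>) \<le> d e (\<beta> u2) + d (\<beta> u2) (gn n \<sigma>)" using triangle[OF eM bu2(1) pM] .
    then have u2b: "T' - m1 < u2" using dp bu2 u2 commute[of "\<beta> u2" "gn n \<sigma>"] by linarith
    have "d (\<beta> u2) (\<alpha> u1) \<le> d (\<beta> u2) (gn n \<sigma>) + d (gn n \<sigma>) (\<alpha> u1)" using triangle[OF bu2(1) pM au1(1)] .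
    then have ba: "d (\<beta> u2) (\<alpha> u1) \<le> 2*m1" using u1 u2 commute[of "\<beta> u2" "gn n \<sigma>"] by linarith
    have FT1: "\<exists>v\<in>{0..A}. d (\<beta> t) (\<alpha> v) \<le> m2 \<and> \<bar>t - v\<bar> \<le> m2" if "t \<in> {0..u2}" for t
      using ft[OF \<alpha>(3,1,2) \<beta>(1,2) u2(1) u1(1) ba that] unfolding m2_def by auto
    show "\<exists>n0. \<forall>i\<ge>n0. \<forall>j\<ge>n0. B \<le> gprod d e (xs i) (ys j)"
    proof (intro exI[of _ "max n0x n0y"] allI impI)
      fix i j assume ij: "max n0x n0y \<le> i" "max n0x n0y \<le> j"
      define Ai where "Ai = d e (xs i)"
      define Bj where "Bj = d e (ys j)"
      have ai: "isometric_on M d (gxn i) {0..Ai}" "gxn i 0 = e" "morse M d N (gxn i) {0..Ai}" "gxn i Ai = xs i" "0 \<le> Ai"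
        using xnM[of i] unfolding Ai_def by auto
      have bj: "isometric_on M d (gyn j) {0..Bj}" "gyn j 0 = e" "morse M d N (gyn j) {0..Bj}" "gyn j Bj = ys j" "0 \<le> Bj"
        using ynM[of j] unfolding Bj_def by auto
      obtain p v1 v2 where P: "v1 \<in> {0..Ai}" "v2 \<in> {0..A}" "d p (gxn i v1) \<le> r" "d p (\<alpha> v2) \<le> r"
        "gprod d e (xs i) (xs i0) \<le> d e p" "p \<in> M"
        using tri_morse[OF G ai(3,1,2,4,5) \<alpha>(3,1,2,4,5)] unfolding r_def by blast
      obtain q w1 w2 where Q: "w1 \<in> {0..Bj}" "w2 \<in> {0..Bb}" "d q (gyn j w1) \<le> r" "d q (\<beta> w2) \<le> r"
        "gprod d e (ys j) (ys j0) \<le> d e q" "q \<in> M"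
        using tri_morse[OF G bj(3,1,2,4,5) \<beta>(3,1,2,4,5)] unfolding r_def by blast
      have gpx: "B' \<le> gprod d e (xs i) (xs i0)" using n0x ij i0 by auto
      have gpy: "B' \<le> gprod d e (ys j) (ys j0)" using n0y ij j0 by auto
      have av2: "\<alpha> v2 \<in> M" "d e (\<alpha> v2) = v2" using alpha_time[OF \<alpha>(1,2) P(2)] by auto
      have bw2: "\<beta> w2 \<in> M" "d e (\<beta> w2) = w2" using alpha_time[OF \<beta>(1,2) Q(2)] by auto
      have xv1: "gxn i v1 \<in> M" using alpha_time[OF ai(1,2) P(1)] by auto
      have yw1: "gyn j w1 \<in> M" using alpha_time[OF bj(1,2) Q(1)] by auto
      have "d e p \<le> d e (\<alpha> v2) + d (\<alpha> v2) p" using triangle[OF eM av2(1) P(6)] .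
      then have v2b: "B' - r \<le> v2" using P(4,5) gpx av2 commute[of "\<alpha> v2" p] by linarith
      have "d e q \<le> d e (\<beta> w2) + d (\<beta> w2) q" using triangle[OF eM bw2(1) Q(6)] .
      then have w2b: "B' - r \<le> w2" using Q(4,5) gpy bw2 commute[of "\<beta> w2" q] by linarith
      have "d (\<alpha> v2) (gxn i v1) \<le> d (\<alpha> v2) p + d p (gxn i v1)" using triangle[OF av2(1) P(6) xv1] .
      then have d2: "d (\<alpha> v2) (gxn i v1) \<le> 2*r" using P(3,4) commute[of "\<alpha> v2" p] by linarith
      have "d (\<beta> w2) (gyn j w1) \<le> d (\<beta> w2) q + d q (gyn j w1)" using triangle[OF bw2(1) Q(6) yw1] .
      then have d3: "d (\<beta> w2) (gyn j w1) \<le> 2*r" using Q(3,4) commute[of "\<beta> w2" q] by linarith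
      have FT2: "\<exists>v\<in>{0..Ai}. d (\<alpha> t) (gxn i v) \<le> m3 \<and> \<bar>t - v\<bar> \<le> m3" if "t \<in> {0..v2}" for t
        using ft[OF ai(3,1,2) \<alpha>(1,2) P(2) P(1) d2 that] unfolding m3_def by auto
      have FT3: "\<exists>w\<in>{0..Bj}. d (\<beta> t) (gyn j w) \<le> m3 \<and> \<bar>t - w\<bar> \<le> m3" if "t \<in> {0..w2}" for t
        using ft[OF bj(3,1,2) \<beta>(1,2) Q(2) Q(1) d3 that] unfolding m3_def by auto
      define \<tau>0 where "\<tau>0 = min (min u2 w2) (v2 - m2)"
      have t0: "\<bar>B\<bar> + m2 + 2*m3 + 2 \<le> \<tau>0" "\<tau>0 \<le> u2" "\<tau>0 \<le> w2" "\<tau>0 \<le> v2 - m2"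
        using u2b v2b w2b nn unfolding \<tau>0_def B'_def T'_def by auto
      have t00: "0 \<le> \<tau>0" using t0 nn by linarith
      obtain u where u: "u \<in> {0..A}" "d (\<beta> \<tau>0) (\<alpha> u) \<le> m2" "\<bar>\<tau>0 - u\<bar> \<le> m2"
        using FT1[of \<tau>0] t0 t00 by auto
      have uv2: "u \<in> {0..v2}" using u t0 by auto
      obtain v where v: "v \<in> {0..Ai}" "d (\<alpha> u) (gxn i v) \<le> m3" "\<bar>u - v\<bar> \<le> m3"
        using FT2[OF uv2] by auto
      obtain w where w: "w \<in> {0..Bj}" "d (\<beta> \<tau>0) (gyn j w) \<le> m3" "\<bar>\<tau>0 - w\<bar> \<le> m3"
        using FT3[of \<tau>0] t0 t00 by auto
      have gpu: "(v + w - d (gxn i v) (gyn j w))/2 \<le> gprod d e (xs i) (ys j)"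
        by (rule gp_upper[OF ai(1,2,4) bj(1,2,4) v(1) w(1)])
      have Ms: "gxn i v \<in> M" "\<alpha> u \<in> M" "\<beta> \<tau>0 \<in> M" "gyn j w \<in> M"
        using alpha_time[OF ai(1,2) v(1)] alpha_time[OF \<alpha>(1,2) u(1)] alpha_time[OF \<beta>(1,2)] t0 t00 u2 alpha_time[OF bj(1,2) w(1)] by auto
      have "d (gxn i v) (gyn j w) \<le> d (gxn i v) (\<alpha> u) + d (\<alpha> u) (\<beta> \<tau>0) + d (\<beta> \<tau>0) (gyn j w)"
        by (rule tri4[OF Ms])
      then have "d (gxn i v) (gyn j w) \<le> 2*m3 + m2"
        using v(2) u(2) w(2) commute[of "gxn i v" "\<alpha> u"] commute[of "\<alpha> u" "\<beta> \<tau>0"] by linarith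
      moreover have "u - m3 \<le> v" "\<tau>0 - m3 \<le> w" "\<tau>0 - m2 \<le> u" using v(3) w(3) u(3) by (auto simp: abs_le_iff)
      moreover have "B \<le> \<bar>B\<bar>" by simp
      ultimately show "B \<le> gprod d e (xs i) (ys j)" using gpu t0 by argo
    qed
  qed
  then show False using ne by simp
qed

end

locale setting2 = setting +
  fixes R0 :: real and \<psi> :: "nat \<Rightarrow> nat" and \<sigma> :: "nat \<Rightarrow> real" and \<gamma> :: "real \<Rightarrow> 'a"
  assumes R0: "0 \<le> R0" and mono: "strict_mono \<psi>"
    and sig: "\<forall>k. \<sigma> k \<in> {0..d (gx (real (\<psi> k))) (gy (real (\<psi> k)))} \<and>
       (\<forall>t\<in>{0..d (gx (real (\<psi> k))) (gy (real (\<psi> k)))}. d e (gn (\<psi> k) (\<sigma> k)) \<le> d e (gn (\<psi> k) t)) \<and>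
       d e (gn (\<psi> k) (\<sigma> k)) \<le> R0"
    and giso: "isometric_on M d \<gamma> UNIV"
    and unif: "\<forall>T \<epsilon>. 0 < \<epsilon> \<longrightarrow> (\<exists>k0::nat. \<forall>k\<ge>k0. \<forall>t\<in>{-T..T}.
              0 \<le> t + \<sigma> k \<and> t + \<sigma> k \<le> d (gx (real (\<psi> k))) (gy (real (\<psi> k))) \<and>
              d (gn (\<psi> k) (t + \<sigma> k)) (\<gamma> t) < \<epsilon>)"
begin

lemma sig_bounds: "real (\<psi> k) - R0 \<le> \<sigma> k \<and> real (\<psi> k) - R0 \<le> d (gx (real (\<psi> k))) (gy (real (\<psi> k))) - \<sigma> k"
proof -
  define n where "n = \<psi> k"
  define L where "L = d (gx (real n)) (gy (real n))"
  have z: "isometric_on M d (gn n) {0..L}" "gn n 0 = gx (real n)" "gn n L = gy (real n)" using hgn L_def by auto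
  have s: "\<sigma> k \<in> {0..L}" "d e (gn n (\<sigma> k)) \<le> R0" using sig n_def L_def by auto
  have L0: "0 \<in> {0..L}" "L \<in> {0..L}" using s by auto
  have M3: "gn n 0 \<in> M" "gn n L \<in> M" "gn n (\<sigma> k) \<in> M" using iso_M[OF z(1)] L0 s by auto
  have d3: "d (gn n (\<sigma> k)) (gn n 0) = \<sigma> k" "d (gn n (\<sigma> k)) (gn n L) = L - \<sigma> k"
    using iso_d[OF z(1)] L0 s by auto
  have "d e (gn n 0) \<le> d e (gn n (\<sigma> k)) + d (gn n (\<sigma> k)) (gn n 0)" "d e (gn n L) \<le> d e (gn n (\<sigma> k)) + d (gn n (\<sigma> k)) (gn n L)"
    using triangle[OF eM M3(3) M3(1)] triangle[OF eM M3(3) M3(2)] .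
  moreover have "d e (gn n 0) = real n" "d e (gn n L) = real n" using z(2,3) gxM[of "real n"] gyM[of "real n"] by auto
  ultimately show ?thesis using s d3 unfolding n_def[symmetric] L_def[symmetric] by linarith
qed

lemma pick_k: "\<exists>k\<ge>k0. X \<le> real (\<psi> k)"
proof -
  define k where "k = max k0 (nat \<lceil>X\<rceil>)"
  have "k \<le> \<psi> k" using seq_suble[OF mono] .
  moreover have "nat \<lceil>X\<rceil> \<le> k" unfolding k_def by simp
  ultimately have "real (nat \<lceil>X\<rceil>) \<le> real (\<psi> k)" by simp
  moreover have "X \<le> real (nat \<lceil>X\<rceil>)" by (rule real_nat_ceiling_ge)
  ultimately have "X \<le> real (\<psi> k)" by linarith
  moreover have "k0 \<le> k" using k_def by simp
  ultimately show ?thesis by blast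
qed

lemma near_gx:
  assumes s: "s \<le> 0" and \<delta>: "0 < \<delta>"
  shows "\<exists>u. 0 \<le> u \<and> u \<le> d e (\<gamma> s) + N 3 0 + 1 \<and> d (\<gamma> s) (gx u) \<le> N 3 0 + \<delta>"
proof -
  define \<epsilon> where "\<epsilon> = min \<delta> 1 / 3"
  have \<epsilon>: "0 < \<epsilon>" "\<epsilon> \<le> 1/3" "3*\<epsilon> \<le> \<delta>" using \<delta> unfolding \<epsilon>_def by auto
  define r0 where "r0 = N 3 0"
  have r0: "0 \<le> r0" using mg unfolding r0_def morse_gauge_def by auto
  obtain k0 where k0: "\<forall>k\<ge>k0. \<forall>t\<in>{-\<bar>s\<bar>..\<bar>s\<bar>}. 0 \<le> t + \<sigma> k \<and> t + \<sigma> k \<le> d (gx (real (\<psi> k))) (gy (real (\<psi> k))) \<and>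
              d (gn (\<psi> k) (t + \<sigma> k)) (\<gamma> t) < \<epsilon>" using unif \<epsilon> by blast
  obtain k where k: "k \<ge> k0" "3*R0 + 4 + \<bar>s\<bar> + d e (\<gamma> s) + r0 + 2 \<le> real (\<psi> k)"
    using pick_k by blast
  define n where "n = real (\<psi> k)"
  define L where "L = d (gx n) (gy n)"
  have z: "isometric_on M d (gn (\<psi> k)) {0..L}" "gn (\<psi> k) 0 = gx n" "gn (\<psi> k) L = gy n" using hgn L_def n_def by auto
  have sk: "\<sigma> k \<in> {0..L}" "\<forall>t\<in>{0..L}. d e (gn (\<psi> k) (\<sigma> k)) \<le> d e (gn (\<psi> k) t)" "d e (gn (\<psi> k) (\<sigma> k)) \<le> R0"
    using sig L_def n_def by auto
  have sb: "n - R0 \<le> \<sigma> k" using sig_bounds n_def by auto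
  have sI: "s \<in> {-\<bar>s\<bar>..\<bar>s\<bar>}" by auto
  have conv: "d (gn (\<psi> k) (s + \<sigma> k)) (\<gamma> s) < \<epsilon>" using k0[rule_format, OF k(1) sI] by blast
  obtain i where i: "n \<le> d e (xs i)" "\<forall>t\<in>{0..n}. d (gxn i t) (gx t) < \<epsilon>" using approx_x[OF \<epsilon>(1), of 0 n] by auto
  have n0: "0 \<le> n" using n_def by simp
  have nI: "n \<in> {0..n}" using n0 by simp
  have c: "d (gxn i n) (gn (\<psi> k) 0) < 1" using i(2)[rule_format, OF nI] z(2) \<epsilon> by simp
  have zs: "isometric_on M d (gn (\<psi> k)) {0..\<sigma> k}" using iso_sub[OF z(1)] sk by auto
  have cl: "\<forall>t\<in>{0..\<sigma> k}. d e (gn (\<psi> k) (\<sigma> k)) \<le> d e (gn (\<psi> k) t)" using sk by auto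
  have dg0: "0 \<le> d e (\<gamma> s)" by simp
  have nbig: "3*R0 + 4 \<le> n" using k(2) R0 dg0 r0 n_def abs_ge_zero[of s] by linarith
  have tI: "s + \<sigma> k \<in> {2..\<sigma> k}" unfolding atLeastAtMost_iff using sb s k(2) r0 n_def R0 dg0 by linarith
  obtain u where u: "u \<in> {0..d e (xs i)}" "d (gn (\<psi> k) (s + \<sigma> k)) (gxn i u) \<le> r0"
    using core[OF G xnM(4) xnM(1) xnM(2) n0 i(1) c zs cl sk(3) sb nbig tI] r0_def by auto
  have Ms: "\<gamma> s \<in> M" "gn (\<psi> k) (s + \<sigma> k) \<in> M" "gxn i u \<in> M" using iso_M[OF giso] iso_M[OF zs] tI alpha_time[OF xnM(1,2) u(1)] by auto
  have du: "d e (gxn i u) = u" using alpha_time[OF xnM(1,2) u(1)] by auto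
  have "d (\<gamma> s) (gxn i u) \<le> d (\<gamma> s) (gn (\<psi> k) (s + \<sigma> k)) + d (gn (\<psi> k) (s + \<sigma> k)) (gxn i u)" using triangle[OF Ms] .
  then have g1: "d (\<gamma> s) (gxn i u) < r0 + \<epsilon>" using conv u commute[of "\<gamma> s" "gn (\<psi> k) (s + \<sigma> k)"] by linarith
  have "d e (gxn i u) \<le> d e (\<gamma> s) + d (\<gamma> s) (gxn i u)" using triangle[OF eM Ms(1) Ms(3)] .
  then have ub: "u \<le> d e (\<gamma> s) + r0 + \<epsilon>" using g1 du by linarith
  have un: "u \<in> {0..n}" using ub u(1) k(2) n_def \<epsilon> r0 R0 by auto
  have g2: "d (gxn i u) (gx u) < \<epsilon>" using i(2) un by auto
  have gxu: "gx u \<in> M" using gxM u(1) by auto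
  have "d (\<gamma> s) (gx u) \<le> d (\<gamma> s) (gxn i u) + d (gxn i u) (gx u)" using triangle[OF Ms(1) Ms(3) gxu] .
  then show ?thesis using g1 g2 ub u(1) \<epsilon> unfolding r0_def[symmetric] by (intro exI[of _ u]) auto
qed

lemma near_gy:
  assumes s: "0 \<le> s" and \<delta>: "0 < \<delta>"
  shows "\<exists>u. 0 \<le> u \<and> u \<le> d e (\<gamma> s) + N 3 0 + 1 \<and> d (\<gamma> s) (gy u) \<le> N 3 0 + \<delta>"
proof -
  define \<epsilon> where "\<epsilon> = min \<delta> 1 / 3"
  have \<epsilon>: "0 < \<epsilon>" "\<epsilon> \<le> 1/3" "3*\<epsilon> \<le> \<delta>" using \<delta> unfolding \<epsilon>_def by auto
  define r0 where "r0 = N 3 0"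
  have r0: "0 \<le> r0" using mg unfolding r0_def morse_gauge_def by auto
  obtain k0 where k0: "\<forall>k\<ge>k0. \<forall>t\<in>{-\<bar>s\<bar>..\<bar>s\<bar>}. 0 \<le> t + \<sigma> k \<and> t + \<sigma> k \<le> d (gx (real (\<psi> k))) (gy (real (\<psi> k))) \<and>
              d (gn (\<psi> k) (t + \<sigma> k)) (\<gamma> t) < \<epsilon>" using unif \<epsilon> by blast
  obtain k where k: "k \<ge> k0" "3*R0 + 4 + \<bar>s\<bar> + d e (\<gamma> s) + r0 + 2 \<le> real (\<psi> k)"
    using pick_k by blast
  define n where "n = real (\<psi> k)"
  define L where "L = d (gx n) (gy n)"
  have z: "isometric_on M d (gn (\<psi> k)) {0..L}" "gn (\<psi> k) 0 = gx n" "gn (\<psi> k) L = gy n" using hgn L_def n_def by auto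
  have sk: "\<sigma> k \<in> {0..L}" "\<forall>t\<in>{0..L}. d e (gn (\<psi> k) (\<sigma> k)) \<le> d e (gn (\<psi> k) t)" "d e (gn (\<psi> k) (\<sigma> k)) \<le> R0"
    using sig L_def n_def by auto
  have sb: "n - R0 \<le> L - \<sigma> k" using sig_bounds n_def L_def by auto
  have sI: "s \<in> {-\<bar>s\<bar>..\<bar>s\<bar>}" by auto
  have conv: "d (gn (\<psi> k) (s + \<sigma> k)) (\<gamma> s) < \<epsilon>" using k0[rule_format, OF k(1) sI] by blast
  obtain i where i: "n \<le> d e (ys i)" "\<forall>t\<in>{0..n}. d (gyn i t) (gy t) < \<epsilon>" using approx_y[OF \<epsilon>(1), of 0 n] by auto
  have n0: "0 \<le> n" using n_def by simp
  define \<zeta> where "\<zeta> t = gn (\<psi> k) (L - t)" for t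
  have z': "isometric_on M d \<zeta> {0..L}" using iso_reverse[OF z(1)] unfolding \<zeta>_def by simp
  have nI: "n \<in> {0..n}" using n0 by simp
  have c: "d (gyn i n) (\<zeta> 0) < 1" using i(2)[rule_format, OF nI] z(3) \<epsilon> unfolding \<zeta>_def by simp
  have zs: "isometric_on M d \<zeta> {0..L - \<sigma> k}" using iso_sub[OF z'] sk by auto
  have cl: "\<forall>t\<in>{0..L - \<sigma> k}. d e (\<zeta> (L - \<sigma> k)) \<le> d e (\<zeta> t)" using sk unfolding \<zeta>_def by auto
  have R': "d e (\<zeta> (L - \<sigma> k)) \<le> R0" using sk unfolding \<zeta>_def by auto
  have dg0: "0 \<le> d e (\<gamma> s)" by simp
  have nbig: "3*R0 + 4 \<le> n" using k(2) R0 dg0 r0 n_def abs_ge_zero[of s] by linarith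
  have tI: "L - \<sigma> k - s \<in> {2..L - \<sigma> k}" unfolding atLeastAtMost_iff using sb s k(2) r0 n_def R0 dg0 by linarith
  have ze: "\<zeta> (L - \<sigma> k - s) = gn (\<psi> k) (s + \<sigma> k)" unfolding \<zeta>_def by (simp add: algebra_simps)
  obtain u where u: "u \<in> {0..d e (ys i)}" "d (gn (\<psi> k) (s + \<sigma> k)) (gyn i u) \<le> r0"
    using core[OF G ynM(4) ynM(1) ynM(2) n0 i(1) c zs cl R' sb nbig tI] r0_def ze by auto
  have tI0: "L - \<sigma> k - s \<in> {0..L - \<sigma> k}" using tI by auto
  have "\<zeta> (L - \<sigma> k - s) \<in> M" using iso_M[OF zs tI0] .
  then have Ms: "\<gamma> s \<in> M" "gn (\<psi> k) (s + \<sigma> k) \<in> M" "gyn i u \<in> M" using iso_M[OF giso] ze alpha_time[OF ynM(1,2) u(1)] by auto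
  have du: "d e (gyn i u) = u" using alpha_time[OF ynM(1,2) u(1)] by auto
  have "d (\<gamma> s) (gyn i u) \<le> d (\<gamma> s) (gn (\<psi> k) (s + \<sigma> k)) + d (gn (\<psi> k) (s + \<sigma> k)) (gyn i u)" using triangle[OF Ms] .
  then have g1: "d (\<gamma> s) (gyn i u) < r0 + \<epsilon>" using conv u commute[of "\<gamma> s" "gn (\<psi> k) (s + \<sigma> k)"] by linarith
  have "d e (gyn i u) \<le> d e (\<gamma> s) + d (\<gamma> s) (gyn i u)" using triangle[OF eM Ms(1) Ms(3)] .
  then have ub: "u \<le> d e (\<gamma> s) + r0 + \<epsilon>" using g1 du by linarith
  have un: "u \<in> {0..n}" using ub u(1) k(2) n_def \<epsilon> r0 R0 by auto
  have g2: "d (gyn i u) (gy u) < \<epsilon>" using i(2) un by auto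
  have gyu: "gy u \<in> M" using gyM u(1) by auto
  have "d (\<gamma> s) (gy u) \<le> d (\<gamma> s) (gyn i u) + d (gyn i u) (gy u)" using triangle[OF Ms(1) Ms(3) gyu] .
  then show ?thesis using g1 g2 ub u(1) \<epsilon> unfolding r0_def[symmetric] by (intro exI[of _ u]) auto
qed


lemma HX: "s1 \<le> 0 \<Longrightarrow> s2 \<le> 0 \<Longrightarrow> \<exists>\<alpha> A u1 u2. morse M d N \<alpha> {0..A} \<and> isometric_on M d \<alpha> {0..A} \<and>
              u1 \<in> {0..A} \<and> u2 \<in> {0..A} \<and> d (\<gamma> s1) (\<alpha> u1) \<le> N 3 0 + 1 \<and> d (\<gamma> s2) (\<alpha> u2) \<le> N 3 0 + 1"
proof -
  assume s: "s1 \<le> 0" "s2 \<le> 0"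
  obtain u1 where u1: "0 \<le> u1" "d (\<gamma> s1) (gx u1) \<le> N 3 0 + 1/2" using near_gx[OF s(1), of "1/2"] by auto
  obtain u2 where u2: "0 \<le> u2" "d (\<gamma> s2) (gx u2) \<le> N 3 0 + 1/2" using near_gx[OF s(2), of "1/2"] by auto
  obtain i where i: "max u1 u2 \<le> d e (xs i)" "\<forall>t\<in>{0..max u1 u2}. d (gxn i t) (gx t) < 1/2"
    using approx_x[of "1/2" 0 "max u1 u2"] by auto
  have I: "u1 \<in> {0..d e (xs i)}" "u2 \<in> {0..d e (xs i)}" using i u1 u2 by auto
  have c1: "d (gxn i u1) (gx u1) < 1/2" "d (gxn i u2) (gx u2) < 1/2" using i(2) u1 u2 by auto
  have M1: "\<gamma> s1 \<in> M" "gx u1 \<in> M" "gxn i u1 \<in> M" using iso_M[OF giso] gxM u1 alpha_time[OF xnM(1,2) I(1)] by auto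
  have M2: "\<gamma> s2 \<in> M" "gx u2 \<in> M" "gxn i u2 \<in> M" using iso_M[OF giso] gxM u2 alpha_time[OF xnM(1,2) I(2)] by auto
  have "d (\<gamma> s1) (gxn i u1) \<le> d (\<gamma> s1) (gx u1) + d (gx u1) (gxn i u1)" using triangle[OF M1(1,2,3)] .
  then have d1: "d (\<gamma> s1) (gxn i u1) \<le> N 3 0 + 1" using u1 c1 commute[of "gx u1" "gxn i u1"] by linarith
  have "d (\<gamma> s2) (gxn i u2) \<le> d (\<gamma> s2) (gx u2) + d (gx u2) (gxn i u2)" using triangle[OF M2(1,2,3)] .
  then have d2: "d (\<gamma> s2) (gxn i u2) \<le> N 3 0 + 1" using u2 c1 commute[of "gx u2" "gxn i u2"] by linarith
  show ?thesis using xnM(4)[of i] xnM(1)[of i] I d1 d2 by blast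
qed

lemma HY: "0 \<le> s1 \<Longrightarrow> 0 \<le> s2 \<Longrightarrow> \<exists>\<alpha> A u1 u2. morse M d N \<alpha> {0..A} \<and> isometric_on M d \<alpha> {0..A} \<and>
              u1 \<in> {0..A} \<and> u2 \<in> {0..A} \<and> d (\<gamma> s1) (\<alpha> u1) \<le> N 3 0 + 1 \<and> d (\<gamma> s2) (\<alpha> u2) \<le> N 3 0 + 1"
proof -
  assume s: "0 \<le> s1" "0 \<le> s2"
  obtain u1 where u1: "0 \<le> u1" "d (\<gamma> s1) (gy u1) \<le> N 3 0 + 1/2" using near_gy[OF s(1), of "1/2"] by auto
  obtain u2 where u2: "0 \<le> u2" "d (\<gamma> s2) (gy u2) \<le> N 3 0 + 1/2" using near_gy[OF s(2), of "1/2"] by auto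
  obtain i where i: "max u1 u2 \<le> d e (ys i)" "\<forall>t\<in>{0..max u1 u2}. d (gyn i t) (gy t) < 1/2"
    using approx_y[of "1/2" 0 "max u1 u2"] by auto
  have I: "u1 \<in> {0..d e (ys i)}" "u2 \<in> {0..d e (ys i)}" using i u1 u2 by auto
  have c1: "d (gyn i u1) (gy u1) < 1/2" "d (gyn i u2) (gy u2) < 1/2" using i(2) u1 u2 by auto
  have M1: "\<gamma> s1 \<in> M" "gy u1 \<in> M" "gyn i u1 \<in> M" using iso_M[OF giso] gyM u1 alpha_time[OF ynM(1,2) I(1)] by auto
  have M2: "\<gamma> s2 \<in> M" "gy u2 \<in> M" "gyn i u2 \<in> M" using iso_M[OF giso] gyM u2 alpha_time[OF ynM(1,2) I(2)] by auto
  have "d (\<gamma> s1) (gyn i u1) \<le> d (\<gamma> s1) (gy u1) + d (gy u1) (gyn i u1)" using triangle[OF M1(1,2,3)] .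
  then have d1: "d (\<gamma> s1) (gyn i u1) \<le> N 3 0 + 1" using u1 c1 commute[of "gy u1" "gyn i u1"] by linarith
  have "d (\<gamma> s2) (gyn i u2) \<le> d (\<gamma> s2) (gy u2) + d (gy u2) (gyn i u2)" using triangle[OF M2(1,2,3)] .
  then have d2: "d (\<gamma> s2) (gyn i u2) \<le> N 3 0 + 1" using u2 c1 commute[of "gy u2" "gyn i u2"] by linarith
  show ?thesis using ynM(4)[of i] ynM(1)[of i] I d1 d2 by blast
qed

lemma gamma_is_morse: "morse M d (NP N (N 3 0 + 1)) \<gamma> UNIV"
proof -
  have "0 \<le> N 3 0 + 1" using mg unfolding morse_gauge_def by (smt (verit) one_le_numeral)
  then show ?thesis using gamma_morse[OF mg G giso _ HX HY] by blast
qed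

lemma close_ray:
  assumes g: "isometric_on M d g {0..}" and x: "x \<in> M" and U: "0 \<le> U"
    and H: "\<And>\<delta>. 0 < \<delta> \<Longrightarrow> \<exists>u. 0 \<le> u \<and> u \<le> U \<and> d x (g u) \<le> r + \<delta>"
  shows "\<exists>u\<ge>0. d x (g u) \<le> r"
proof -
  have gi: "isometric_on M d g {0..U}" using iso_sub[OF g] by auto
  obtain u where u: "u \<in> {0..U}" "\<forall>t\<in>{0..U}. d x (g u) \<le> d x (g t)"
    using closest_point[OF gi U x] by blast
  have "d x (g u) \<le> r + \<delta>" if "0 < \<delta>" for \<delta>
  proof -
    have "\<exists>v. 0 \<le> v \<and> v \<le> U \<and> d x (g v) \<le> r + \<delta>" using H that by blast
    then obtain v where v: "0 \<le> v" "v \<le> U" "d x (g v) \<le> r + \<delta>" by blast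
    then have "d x (g u) \<le> d x (g v)" using u by auto
    then show ?thesis using v by linarith
  qed
  then have "d x (g u) \<le> r" by (rule field_le_epsilon)
  then show ?thesis using u by auto
qed

lemma gamma_nbhd: "\<gamma> ` UNIV \<subseteq> nbhd M d (4 * N 3 0) (gx ` {0..} \<union> gy ` {0..})"
proof
  fix x assume "x \<in> \<gamma> ` UNIV"
  then obtain s where x: "x = \<gamma> s" by auto
  have xM: "x \<in> M" using iso_M[OF giso] x by auto
  have r0: "0 \<le> N 3 0" using mg unfolding morse_gauge_def by auto
  define U where "U = d e (\<gamma> s) + N 3 0 + 1"
  have U: "0 \<le> U" using r0 unfolding U_def by (simp add: add_nonneg_nonneg)
  show "x \<in> nbhd M d (4 * N 3 0) (gx ` {0..} \<union> gy ` {0..})"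
  proof (cases "s \<le> 0")
    case True
    obtain u where u: "0 \<le> u" "d x (gx u) \<le> N 3 0"
      using close_ray[OF gxi xM U, of "N 3 0"] near_gx[OF True] x U_def by blast
    then show ?thesis using xM r0 unfolding nbhd_def by (intro CollectI conjI bexI[of _ "gx u"]) auto
  next
    case False
    then have s0: "0 \<le> s" by auto
    obtain u where u: "0 \<le> u" "d x (gy u) \<le> N 3 0"
      using close_ray[OF gyi xM U, of "N 3 0"] near_gy[OF s0] x U_def by blast
    then show ?thesis using xM r0 unfolding nbhd_def by (intro CollectI conjI bexI[of _ "gy u"]) auto
  qed
qed

end

context setting begin

lemma main_setting:
  "\<exists>\<gamma> \<psi> s. isometric_on M d \<gamma> UNIV \<and> morse M d (NP N (N 3 0 + 1)) \<gamma> UNIV \<and> strict_mono (\<psi> :: nat \<Rightarrow> nat) \<and>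
     (\<forall>T \<epsilon>. 0 < \<epsilon> \<longrightarrow> (\<exists>k0::nat. \<forall>k\<ge>k0. \<forall>t\<in>{-T..T}.
        0 \<le> t + s k \<and> t + s k \<le> d (gx (real (\<psi> k))) (gy (real (\<psi> k))) \<and>
        d (gn (\<psi> k) (t + s k)) (\<gamma> t) < \<epsilon>)) \<and>
     \<gamma> ` UNIV \<subseteq> nbhd M d (4 * N 3 0) (gx ` {0..} \<union> gy ` {0..})"
proof -
  obtain R0 where R0: "\<forall>n0. \<exists>n\<ge>n0. \<exists>t\<in>{0..d (gx (real n)) (gy (real n))}. d e (gn n t) \<le> R0"
    using R0_exists by blast
  define S where "S = {n. \<exists>t\<in>{0..d (gx (real n)) (gy (real n))}. d e (gn n t) \<le> R0}"
  have infS: "infinite S" using R0 unfolding S_def infinite_nat_iff_unbounded_le by auto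
  define ns where "ns = enumerate S"
  have nsm: "strict_mono ns" using strict_mono_enumerate[OF infS] ns_def by simp
  have nsS: "ns k \<in> S" for k using enumerate_in_set[OF infS] ns_def by simp
  have R00: "0 \<le> R0"
  proof -
    obtain t where "d e (gn (ns 0) t) \<le> R0" using nsS[of 0] unfolding S_def by blast
    then show ?thesis using nonneg[of e "gn (ns 0) t"] by linarith
  qed
  define L where "L k = d (gx (real (ns k))) (gy (real (ns k)))" for k
  have zk: "isometric_on M d (gn (ns k)) {0..L k}" "gn (ns k) 0 = gx (real (ns k))" "gn (ns k) (L k) = gy (real (ns k))" for k
    using hgn L_def by auto
  have L0: "0 \<le> L k" for k using L_def by simp
  define \<sigma>s where "\<sigma>s k = (SOME \<sigma>. \<sigma> \<in> {0..L k} \<and> (\<forall>t\<in>{0..L k}. d e (gn (ns k) \<sigma>) \<le> d e (gn (ns k) t)))" for k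
  have \<sigma>s: "\<sigma>s k \<in> {0..L k} \<and> (\<forall>t\<in>{0..L k}. d e (gn (ns k) (\<sigma>s k)) \<le> d e (gn (ns k) t))" for k
    unfolding \<sigma>s_def by (rule someI_ex) (use closest_point[OF zk(1) L0 eM] in blast)
  have \<sigma>R: "d e (gn (ns k) (\<sigma>s k)) \<le> R0" for k
  proof -
    obtain t where "t \<in> {0..L k}" "d e (gn (ns k) t) \<le> R0" using nsS[of k] unfolding S_def L_def by blast
    then show ?thesis using \<sigma>s[of k] by force
  qed
  have bounds: "real (ns k) - R0 \<le> \<sigma>s k \<and> real (ns k) - R0 \<le> L k - \<sigma>s k" for k
  proof -
    have s: "\<sigma>s k \<in> {0..L k}" using \<sigma>s by auto
    have Li: "0 \<in> {0..L k}" "L k \<in> {0..L k}" using L0 by auto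
    have M3: "gn (ns k) 0 \<in> M" "gn (ns k) (L k) \<in> M" "gn (ns k) (\<sigma>s k) \<in> M" using iso_M[OF zk(1)] Li s by auto
    have d3: "d (gn (ns k) (\<sigma>s k)) (gn (ns k) 0) = \<sigma>s k" "d (gn (ns k) (\<sigma>s k)) (gn (ns k) (L k)) = L k - \<sigma>s k"
      using iso_d[OF zk(1)] Li s by auto
    have "d e (gn (ns k) 0) \<le> d e (gn (ns k) (\<sigma>s k)) + d (gn (ns k) (\<sigma>s k)) (gn (ns k) 0)"
         "d e (gn (ns k) (L k)) \<le> d e (gn (ns k) (\<sigma>s k)) + d (gn (ns k) (\<sigma>s k)) (gn (ns k) (L k))"
      using triangle[OF eM M3(3) M3(1)] triangle[OF eM M3(3) M3(2)] .
    moreover have "d e (gn (ns k) 0) = real (ns k)" "d e (gn (ns k) (L k)) = real (ns k)"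
      using zk(2,3) gxM[of "real (ns k)"] gyM[of "real (ns k)"] by auto
    ultimately show ?thesis using d3 \<sigma>R[of k] by linarith
  qed
  define h where "h k t = gn (ns k) (t + \<sigma>s k)" for k t
  have hiso: "isometric_on M d (h k) {- \<sigma>s k..L k - \<sigma>s k}" for k
    using iso_shift[OF zk(1)[of k], where c = "\<sigma>s k"] unfolding h_def by simp
  have hh: "\<forall>k. isometric_on M d (h k) {(\<lambda>k. - \<sigma>s k) k..(\<lambda>k. L k - \<sigma>s k) k} \<and> (\<lambda>k. - \<sigma>s k) k \<le> 0 \<and>
       0 \<le> (\<lambda>k. L k - \<sigma>s k) k \<and> d e (h k 0) \<le> R0"
    using hiso \<sigma>s \<sigma>R unfolding h_def by auto
  have ab: "\<forall>T. \<exists>k0. \<forall>k\<ge>k0. (\<lambda>k. - \<sigma>s k) k \<le> -T \<and> T \<le> (\<lambda>k. L k - \<sigma>s k) k"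
  proof
    fix T
    show "\<exists>k0. \<forall>k\<ge>k0. (\<lambda>k. - \<sigma>s k) k \<le> -T \<and> T \<le> (\<lambda>k. L k - \<sigma>s k) k"
    proof (intro exI[of _ "nat \<lceil>T + R0\<rceil>"] allI impI)
      fix k assume k: "nat \<lceil>T + R0\<rceil> \<le> k"
      have "k \<le> ns k" using seq_suble[OF nsm] .
      then have "real (nat \<lceil>T + R0\<rceil>) \<le> real (ns k)" using k by simp
      moreover have "T + R0 \<le> real (nat \<lceil>T + R0\<rceil>)" by (rule real_nat_ceiling_ge)
      ultimately show "(\<lambda>k. - \<sigma>s k) k \<le> -T \<and> T \<le> (\<lambda>k. L k - \<sigma>s k) k" using bounds[of k] by auto
    qed
  qed
  obtain r \<gamma> where r: "strict_mono (r :: nat \<Rightarrow> nat)" "isometric_on M d \<gamma> UNIV"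
    "\<forall>T \<epsilon>. 0 < \<epsilon> \<longrightarrow> (\<exists>k0. \<forall>k\<ge>k0. \<forall>t\<in>{-T..T}. (\<lambda>k. - \<sigma>s k) (r k) \<le> t \<and> t \<le> (\<lambda>k. L k - \<sigma>s k) (r k) \<and> d (h (r k) t) (\<gamma> t) < \<epsilon>)"
    using AA[OF pr eM hh ab] by blast
  define \<psi> where "\<psi> = ns \<circ> r"
  define s where "s = \<sigma>s \<circ> r"
  have \<psi>m: "strict_mono \<psi>" unfolding \<psi>_def using nsm r(1) by (rule strict_mono_o)
  have unif: "\<forall>T \<epsilon>. 0 < \<epsilon> \<longrightarrow> (\<exists>k0::nat. \<forall>k\<ge>k0. \<forall>t\<in>{-T..T}.
        0 \<le> t + s k \<and> t + s k \<le> d (gx (real (\<psi> k))) (gy (real (\<psi> k))) \<and>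
        d (gn (\<psi> k) (t + s k)) (\<gamma> t) < \<epsilon>)"
  proof (intro allI impI)
    fix T \<epsilon> :: real assume \<epsilon>: "0 < \<epsilon>"
    obtain k0 where k0: "\<forall>k\<ge>k0. \<forall>t\<in>{-T..T}. - \<sigma>s (r k) \<le> t \<and> t \<le> L (r k) - \<sigma>s (r k) \<and> d (h (r k) t) (\<gamma> t) < \<epsilon>"
      using r(3) \<epsilon> by blast
    show "\<exists>k0::nat. \<forall>k\<ge>k0. \<forall>t\<in>{-T..T}.
        0 \<le> t + s k \<and> t + s k \<le> d (gx (real (\<psi> k))) (gy (real (\<psi> k))) \<and>
        d (gn (\<psi> k) (t + s k)) (\<gamma> t) < \<epsilon>"
    proof (intro exI[of _ k0] allI impI ballI)
      fix k t assume k: "k0 \<le> k" and t: "t \<in> {-T..T}"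
      have H: "- \<sigma>s (r k) \<le> t \<and> t \<le> L (r k) - \<sigma>s (r k) \<and> d (h (r k) t) (\<gamma> t) < \<epsilon>"
        using k0 k t by blast
      show "0 \<le> t + s k \<and> t + s k \<le> d (gx (real (\<psi> k))) (gy (real (\<psi> k))) \<and>
        d (gn (\<psi> k) (t + s k)) (\<gamma> t) < \<epsilon>"
        using H unfolding \<psi>_def s_def h_def L_def by auto
    qed
  qed
  have S2: "setting2 M d N e xs ys gxn gyn gx gy gn R0 \<psi> s \<gamma>"
  proof (rule setting2.intro)
    show "setting M d N e xs ys gxn gyn gx gy gn" by (rule setting_axioms)
    show "setting2_axioms M d e gx gy gn R0 \<psi> s \<gamma>"
      unfolding setting2_axioms_def
      using R00 \<psi>m r(2) unif \<sigma>s \<sigma>R unfolding \<psi>_def s_def L_def by auto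
  qed
  show ?thesis using setting2.gamma_is_morse[OF S2] setting2.gamma_nbhd[OF S2] r(2) \<psi>m unif by blast
qed

end

theorem lemma3p4:
  fixes N :: "real \<Rightarrow> real \<Rightarrow> real"
  assumes "morse_gauge N"
  shows "\<exists>N'. morse_gauge N' \<and>
    (\<forall>(M :: 'a set) d e xs ys gxn gyn gx gy gn.
       Metric_space M d \<and> proper_mspace M d \<and> geodesic_mspace M d \<and> e \<in> M \<and>
       (\<forall>n. xs n \<in> morse_stratum M d N e) \<and> (\<forall>n. ys n \<in> morse_stratum M d N e) \<and>
       converges_at_infinity d e xs \<and> converges_at_infinity d e ys \<and>
       \<not> gromov_equiv d e xs ys \<and>
       (\<forall>n. isometric_on M d (gxn n) {0..d e (xs n)} \<and> gxn n 0 = e \<and>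
            gxn n (d e (xs n)) = xs n \<and> morse M d N (gxn n) {0..d e (xs n)}) \<and>
       (\<forall>n. isometric_on M d (gyn n) {0..d e (ys n)} \<and> gyn n 0 = e \<and>
            gyn n (d e (ys n)) = ys n \<and> morse M d N (gyn n) {0..d e (ys n)}) \<and>
       isometric_on M d gx {0..} \<and> gx 0 = e \<and>
       isometric_on M d gy {0..} \<and> gy 0 = e \<and>
       subseq_limit_ray d (\<lambda>n. d e (xs n)) gxn gx \<and>
       subseq_limit_ray d (\<lambda>n. d e (ys n)) gyn gy \<and>
       (\<forall>n::nat. isometric_on M d (gn n) {0..d (gx (real n)) (gy (real n))} \<and>
            gn n 0 = gx (real n) \<and> gn n (d (gx (real n)) (gy (real n))) = gy (real n))
     \<longrightarrow>
       (\<exists>\<gamma> \<psi> s. isometric_on M d \<gamma> UNIV \<and> morse M d N' \<gamma> UNIV \<and> strict_mono (\<psi> :: nat \<Rightarrow> nat) \<and>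
          (\<forall>T \<epsilon>. 0 < \<epsilon> \<longrightarrow> (\<exists>k0::nat. \<forall>k\<ge>k0. \<forall>t\<in>{-T..T}.
              0 \<le> t + s k \<and> t + s k \<le> d (gx (real (\<psi> k))) (gy (real (\<psi> k))) \<and>
              d (gn (\<psi> k) (t + s k)) (\<gamma> t) < \<epsilon>)) \<and>
          \<gamma> ` UNIV \<subseteq> nbhd M d (4 * N 3 0) (gx ` {0..} \<union> gy ` {0..})))"
proof (intro exI[of _ "NP N (N 3 0 + 1)"] conjI allI impI)
  have r: "0 \<le> N 3 0 + 1" using assms unfolding morse_gauge_def by (smt (verit) one_le_numeral)
  show "morse_gauge (NP N (N 3 0 + 1))" by (rule NP_gauge[OF assms r])
  fix M :: "'a set" and d e xs ys gxn gyn gx gy gn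
  assume H: "Metric_space M d \<and> proper_mspace M d \<and> geodesic_mspace M d \<and> e \<in> M \<and>
       (\<forall>n. xs n \<in> morse_stratum M d N e) \<and> (\<forall>n. ys n \<in> morse_stratum M d N e) \<and>
       converges_at_infinity d e xs \<and> converges_at_infinity d e ys \<and>
       \<not> gromov_equiv d e xs ys \<and>
       (\<forall>n. isometric_on M d (gxn n) {0..d e (xs n)} \<and> gxn n 0 = e \<and>
            gxn n (d e (xs n)) = xs n \<and> morse M d N (gxn n) {0..d e (xs n)}) \<and>
       (\<forall>n. isometric_on M d (gyn n) {0..d e (ys n)} \<and> gyn n 0 = e \<and>
            gyn n (d e (ys n)) = ys n \<and> morse M d N (gyn n) {0..d e (ys n)}) \<and>
       isometric_on M d gx {0..} \<and> gx 0 = e \<and>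
       isometric_on M d gy {0..} \<and> gy 0 = e \<and>
       subseq_limit_ray d (\<lambda>n. d e (xs n)) gxn gx \<and>
       subseq_limit_ray d (\<lambda>n. d e (ys n)) gyn gy \<and>
       (\<forall>n::nat. isometric_on M d (gn n) {0..d (gx (real n)) (gy (real n))} \<and>
            gn n 0 = gx (real n) \<and> gn n (d (gx (real n)) (gy (real n))) = gy (real n))"
  have S: "setting M d N e xs ys gxn gyn gx gy gn"
    unfolding setting_def setting_axioms_def using H assms by auto
  show "\<exists>\<gamma> \<psi> s. isometric_on M d \<gamma> UNIV \<and> morse M d (NP N (N 3 0 + 1)) \<gamma> UNIV \<and> strict_mono (\<psi> :: nat \<Rightarrow> nat) \<and>
          (\<forall>T \<epsilon>. 0 < \<epsilon> \<longrightarrow> (\<exists>k0::nat. \<forall>k\<ge>k0. \<forall>t\<in>{-T..T}.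
              0 \<le> t + s k \<and> t + s k \<le> d (gx (real (\<psi> k))) (gy (real (\<psi> k))) \<and>
              d (gn (\<psi> k) (t + s k)) (\<gamma> t) < \<epsilon>)) \<and>
          \<gamma> ` UNIV \<subseteq> nbhd M d (4 * N 3 0) (gx ` {0..} \<union> gy ` {0..})"
    by (rule setting.main_setting[OF S])
qed

end
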